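(* Let $k$ be a field, let $X$ be a $\mathcal{T}$-space and let $U\in\mathcal{T}$. Then the full additive subcategory of $\mathcal{T}$-flabby objects of $\mathrm{Mod}(k_\mathcal{T})$ is $\Gamma(U;\bullet)$-injective, namely: (i) for every $F\in\mathrm{Mod}(k_\mathcal{T})$ there exist a $\mathcal{T}$-flabby $F'$ and a monomorphism $F\to F'$; (ii) if $0\to F'\to F\to F''\to0$ is exact in $\mathrm{Mod}(k_\mathcal{T})$ and $F'$ is $\mathcal{T}$-flabby, then $0\to\Gamma(U;F')\to\Gamma(U;F)\to\Gamma(U;F'')\to0$ is exact; (iii) if $0\to F'\to F\to F''\to0$ is exact in $\mathrm{Mod}(k_\mathcal{T})$ and $F'$ is $\mathcal{T}$-flabby, then $F$ is $\mathcal{T}$-flabby if and only if $F''$ is $\mathcal{T}$-flabby.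
   Context: Let $X$ be a topological space and $\mathcal{T}$ a family of open subsets of $X$. A $\mathcal{T}$-subset of $X$ is a finite Boolean combination of elements of $\mathcal{T}$; a $\mathcal{T}$-connected subset is a $\mathcal{T}$-subset which is not the disjoint union of two proper $\mathcal{T}$-subsets that are both open and closed in it. $X$ is a $\mathcal{T}$-space if (i) $\mathcal{T}$ is a basis of the topology of $X$ and $\emptyset\in\mathcal{T}$; (ii) $\mathcal{T}$ is closed under finite unions and finite intersections; (iii) every $U\in\mathcal{T}$ has finitely many $\mathcal{T}$-connected components. $X_\mathcal{T}$ is the site whose underlying category is $\mathcal{T}$ (morphisms are inclusions), a family $\{U_i\}\subset\mathcal{T}$ of subsets of $U\in\mathcal{T}$ being a covering of $U$ iff it admits a finite subfamily whose union is $U$. $\mathrm{Mod}(k_\mathcal{T})$ is the category of sheaves of $k$-vector spaces on $X_\mathcal{T}$. $F\in\mathrm{Mod}(k_\mathcal{T})$ is $\mathcal{T}$-flabby if for all $U,V\in\mathcal{T}$ with $U\subseteq V$ the restriction $\Gamma(V;F)\to\Gamma(U;F)$ is surjective. *)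

theory Defs
  imports "HOL-Analysis.Analysis" "HOL-Algebra.Module"
begin

inductive_set tsubsets :: "'a topology \<Rightarrow> 'a set set \<Rightarrow> 'a set set"
  for X T where
  basic: "U \<in> T \<Longrightarrow> U \<in> tsubsets X T"
| compl: "A \<in> tsubsets X T \<Longrightarrow> topspace X - A \<in> tsubsets X T"
| union: "A \<in> tsubsets X T \<Longrightarrow> B \<in> tsubsets X T \<Longrightarrow> A \<union> B \<in> tsubsets X T"

definition tconnected :: "'a topology \<Rightarrow> 'a set set \<Rightarrow> 'a set \<Rightarrow> bool" where
  "tconnected X T S \<longleftrightarrow> S \<in> tsubsets X T \<and>
     \<not> (\<exists>A B. A \<in> tsubsets X T \<and> B \<in> tsubsets X T \<and> A \<union> B = S \<and> A \<inter> B = {} \<and>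
            A \<noteq> S \<and> B \<noteq> S \<and>
            openin (subtopology X S) A \<and> closedin (subtopology X S) A \<and>
            openin (subtopology X S) B \<and> closedin (subtopology X S) B)"

definition tcomponents :: "'a topology \<Rightarrow> 'a set set \<Rightarrow> 'a set \<Rightarrow> 'a set set" where
  "tcomponents X T S = {C. C \<subseteq> S \<and> C \<noteq> {} \<and> tconnected X T C \<and>
      (\<forall>D. tconnected X T D \<and> C \<subseteq> D \<and> D \<subseteq> S \<longrightarrow> D = C)}"

definition tspace :: "'a topology \<Rightarrow> 'a set set \<Rightarrow> bool" where
  "tspace X T \<longleftrightarrow>
     (\<forall>U\<in>T. openin X U) \<and>
     (\<forall>S. openin X S \<longrightarrow> (\<exists>B\<subseteq>T. \<Union>B = S)) \<and>
     {} \<in> T \<and>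
     (\<forall>U\<in>T. \<forall>V\<in>T. U \<union> V \<in> T \<and> U \<inter> V \<in> T) \<and>
     (\<forall>U\<in>T. finite (tcomponents X T U))"

text \<open>A presheaf of K-vector spaces on T: a K-module of sections for each U in T,
  and restriction maps rest V U from sections over V to sections over U.\<close>
record ('a, 'k, 'v) kpsh =
  sect :: "'a set \<Rightarrow> ('k, 'v) module"
  rest :: "'a set \<Rightarrow> 'a set \<Rightarrow> 'v \<Rightarrow> 'v"

definition klinear :: "('k, 'c) ring_scheme \<Rightarrow> ('k, 'v, 'd) module_scheme \<Rightarrow> ('k, 'w, 'e) module_scheme
    \<Rightarrow> ('v \<Rightarrow> 'w) \<Rightarrow> bool" where
  "klinear K M N f \<longleftrightarrow>
     (\<forall>x\<in>carrier M. f x \<in> carrier N) \<and>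
     (\<forall>x\<in>carrier M. \<forall>y\<in>carrier M. f (x \<oplus>\<^bsub>M\<^esub> y) = f x \<oplus>\<^bsub>N\<^esub> f y) \<and>
     (\<forall>a\<in>carrier K. \<forall>x\<in>carrier M. f (a \<odot>\<^bsub>M\<^esub> x) = a \<odot>\<^bsub>N\<^esub> f x)"

definition tcovering :: "'a set set \<Rightarrow> 'a set set \<Rightarrow> 'a set \<Rightarrow> bool" where
  "tcovering T C U \<longleftrightarrow> C \<subseteq> T \<and> (\<forall>W\<in>C. W \<subseteq> U) \<and> (\<exists>C0\<subseteq>C. finite C0 \<and> \<Union>C0 = U)"

definition is_ksheaf :: "('k, 'c) ring_scheme \<Rightarrow> 'a set set \<Rightarrow> ('a, 'k, 'v) kpsh \<Rightarrow> bool" where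
  "is_ksheaf K T F \<longleftrightarrow>
     (\<forall>U\<in>T. module K (sect F U)) \<and>
     (\<forall>U\<in>T. \<forall>V\<in>T. U \<subseteq> V \<longrightarrow> klinear K (sect F V) (sect F U) (rest F V U)) \<and>
     (\<forall>U\<in>T. \<forall>s\<in>carrier (sect F U). rest F U U s = s) \<and>
     (\<forall>U\<in>T. \<forall>V\<in>T. \<forall>W\<in>T. U \<subseteq> V \<and> V \<subseteq> W \<longrightarrow>
        (\<forall>s\<in>carrier (sect F W). rest F V U (rest F W V s) = rest F W U s)) \<and>
     (\<forall>U\<in>T. \<forall>C. tcovering T C U \<longrightarrow>
        (\<forall>s\<in>carrier (sect F U). \<forall>t\<in>carrier (sect F U).
            (\<forall>W\<in>C. rest F U W s = rest F U W t) \<longrightarrow> s = t) \<and>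
        (\<forall>f. (\<forall>W\<in>C. f W \<in> carrier (sect F W)) \<and>
             (\<forall>W1\<in>C. \<forall>W2\<in>C. rest F W1 (W1 \<inter> W2) (f W1) = rest F W2 (W1 \<inter> W2) (f W2)) \<longrightarrow>
             (\<exists>s\<in>carrier (sect F U). \<forall>W\<in>C. rest F U W s = f W)))"

definition is_kmor :: "('k, 'c) ring_scheme \<Rightarrow> 'a set set \<Rightarrow> ('a, 'k, 'v) kpsh \<Rightarrow> ('a, 'k, 'w) kpsh
    \<Rightarrow> ('a set \<Rightarrow> 'v \<Rightarrow> 'w) \<Rightarrow> bool" where
  "is_kmor K T F G \<phi> \<longleftrightarrow>
     (\<forall>U\<in>T. klinear K (sect F U) (sect G U) (\<phi> U)) \<and>
     (\<forall>U\<in>T. \<forall>V\<in>T. U \<subseteq> V \<longrightarrow>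
        (\<forall>s\<in>carrier (sect F V). \<phi> U (rest F V U s) = rest G V U (\<phi> V s)))"

definition is_kmono :: "('k, 'c) ring_scheme \<Rightarrow> 'a set set \<Rightarrow> ('a, 'k, 'v) kpsh \<Rightarrow> ('a, 'k, 'w) kpsh
    \<Rightarrow> ('a set \<Rightarrow> 'v \<Rightarrow> 'w) \<Rightarrow> bool" where
  "is_kmono K T F G \<phi> \<longleftrightarrow> is_kmor K T F G \<phi> \<and> (\<forall>U\<in>T. inj_on (\<phi> U) (carrier (sect F U)))"

text \<open>Exactness of 0 -> F' -> F -> F'' -> 0 in Mod(k_T): phi is injective on sections,
  kernel of psi equals image of phi on sections, and psi is an epimorphism of sheaves
  (every section of F'' lifts locally, i.e. on some covering).\<close>
definition short_exact :: "('k, 'c) ring_scheme \<Rightarrow> 'a set set \<Rightarrow>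
    ('a, 'k, 'v1) kpsh \<Rightarrow> ('a, 'k, 'v2) kpsh \<Rightarrow> ('a, 'k, 'v3) kpsh \<Rightarrow>
    ('a set \<Rightarrow> 'v1 \<Rightarrow> 'v2) \<Rightarrow> ('a set \<Rightarrow> 'v2 \<Rightarrow> 'v3) \<Rightarrow> bool" where
  "short_exact K T F1 F2 F3 \<phi> \<psi> \<longleftrightarrow>
     is_ksheaf K T F1 \<and> is_ksheaf K T F2 \<and> is_ksheaf K T F3 \<and>
     is_kmor K T F1 F2 \<phi> \<and> is_kmor K T F2 F3 \<psi> \<and>
     (\<forall>U\<in>T. inj_on (\<phi> U) (carrier (sect F1 U))) \<and>
     (\<forall>U\<in>T. {s \<in> carrier (sect F2 U). \<psi> U s = \<zero>\<^bsub>sect F3 U\<^esub>} = \<phi> U ` carrier (sect F1 U)) \<and>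
     (\<forall>U\<in>T. \<forall>t\<in>carrier (sect F3 U). \<exists>C. tcovering T C U \<and>
        (\<forall>W\<in>C. \<exists>s\<in>carrier (sect F2 W). \<psi> W s = rest F3 U W t))"

definition sections_exact :: "('a, 'k, 'v1) kpsh \<Rightarrow> ('a, 'k, 'v2) kpsh \<Rightarrow> ('a, 'k, 'v3) kpsh \<Rightarrow>
    ('a set \<Rightarrow> 'v1 \<Rightarrow> 'v2) \<Rightarrow> ('a set \<Rightarrow> 'v2 \<Rightarrow> 'v3) \<Rightarrow> 'a set \<Rightarrow> bool" where
  "sections_exact F1 F2 F3 \<phi> \<psi> U \<longleftrightarrow>
     inj_on (\<phi> U) (carrier (sect F1 U)) \<and>
     {s \<in> carrier (sect F2 U). \<psi> U s = \<zero>\<^bsub>sect F3 U\<^esub>} = \<phi> U ` carrier (sect F1 U) \<and>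
     \<psi> U ` carrier (sect F2 U) = carrier (sect F3 U)"

definition tflabby :: "'a set set \<Rightarrow> ('a, 'k, 'v) kpsh \<Rightarrow> bool" where
  "tflabby T F \<longleftrightarrow> (\<forall>U\<in>T. \<forall>V\<in>T. U \<subseteq> V \<longrightarrow> rest F V U ` carrier (sect F V) = carrier (sect F U))"

end

theory Submission
  imports Defs
begin


definition pf :: "'a set set \<Rightarrow> 'a set set \<Rightarrow> bool" where
"pf T p \<longleftrightarrow> p \<subseteq> T \<and> {} \<notin> p \<and> (\<forall>A\<in>p. \<forall>B\<in>T. A\<subseteq>B \<longrightarrow> B\<in>p) \<and> (\<forall>A\<in>p. \<forall>B\<in>p. A\<inter>B\<in>p)
   \<and> (\<forall>A\<in>T. \<forall>B\<in>T. A\<union>B\<in>p \<longrightarrow> A\<in>p \<or> B\<in>p)"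

lemma prime_filter_exists:
  assumes cl: "\<forall>A\<in>T. \<forall>B\<in>T. A\<union>B\<in>T \<and> A\<inter>B\<in>T" and UT: "U\<in>T"
    and IT: "I \<subseteq> T" and down: "\<forall>A\<in>I. \<forall>B\<in>T. B\<subseteq>A \<longrightarrow> B\<in>I"
    and un: "\<forall>A\<in>I. \<forall>B\<in>I. A\<union>B\<in>I" and e: "{}\<in>I" and UI: "U\<notin>I"
  shows "\<exists>p. pf T p \<and> U\<in>p \<and> p\<inter>I={}"
proof -
  define FF where "FF = {q. q\<subseteq>T \<and> (\<forall>A\<in>q. \<forall>B\<in>T. A\<subseteq>B\<longrightarrow>B\<in>q) \<and> (\<forall>A\<in>q. \<forall>B\<in>q. A\<inter>B\<in>q) \<and> U\<in>q \<and> q\<inter>I={}}"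
  have p0: "{Z\<in>T. U\<subseteq>Z} \<in> FF"
    unfolding FF_def
  proof (rule CollectI, intro conjI)
    show "{Z \<in> T. U \<subseteq> Z} \<inter> I = {}"
    proof (rule ccontr)
      assume "{Z \<in> T. U \<subseteq> Z} \<inter> I \<noteq> {}"
      then obtain Z where "Z\<in>I" "U\<subseteq>Z" by blast
      then have "U\<in>I" using down UT by blast
      then show False using UI by blast
    qed
    show "\<forall>A\<in>{Z \<in> T. U \<subseteq> Z}. \<forall>B\<in>{Z \<in> T. U \<subseteq> Z}. A\<inter>B \<in> {Z \<in> T. U \<subseteq> Z}" using cl by blast
  qed (use UT in blast)+
  have "\<exists>M\<in>FF. \<forall>X\<in>FF. M \<subseteq> X \<longrightarrow> X = M"
  proof (rule subset_Zorn_nonempty)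
    show "FF \<noteq> {}" using p0 by blast
  next
    fix C assume C: "C \<noteq> {}" "subset.chain FF C"
    hence CF: "C \<subseteq> FF" and ch: "\<forall>x\<in>C. \<forall>y\<in>C. x\<subseteq>y \<or> y\<subseteq>x" by (auto simp: subset.chain_def)
    have F1: "x\<subseteq>T" "\<And>A B. A\<in>x \<Longrightarrow> B\<in>T \<Longrightarrow> A\<subseteq>B \<Longrightarrow> B\<in>x" "\<And>A B. A\<in>x \<Longrightarrow> B\<in>x \<Longrightarrow> A\<inter>B\<in>x"
       "U\<in>x" "x\<inter>I={}" if "x\<in>C" for x
      using CF that unfolding FF_def by blast+
    show "\<Union>C \<in> FF" unfolding FF_def
    proof (rule CollectI, intro conjI ballI impI)
      show "\<Union>C \<subseteq> T" using F1(1) by blast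
      show "U \<in> \<Union>C" using F1(4) C(1) by blast
      show "\<Union>C \<inter> I = {}" using F1(5) by blast
    next
      fix A B assume "A \<in> \<Union>C" "B\<in>T" "A\<subseteq>B"
      then show "B \<in> \<Union>C" using F1(2) by blast
    next
      fix A B assume "A \<in> \<Union>C" "B \<in> \<Union>C"
      then obtain x y where xy: "x\<in>C" "y\<in>C" "A\<in>x" "B\<in>y" by blast
      then have "x\<subseteq>y \<or> y\<subseteq>x" using ch by blast
      then show "A\<inter>B \<in> \<Union>C"
      proof
        assume "x\<subseteq>y" then show ?thesis using F1(3)[OF xy(2)] xy by blast
      next
        assume "y\<subseteq>x" then show ?thesis using F1(3)[OF xy(1)] xy by blast
      qed
    qed
  qed
  then obtain M where MF: "M\<in>FF" and mx: "\<forall>X\<in>FF. M \<subseteq> X \<longrightarrow> X = M" by blast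
  have MT: "M\<subseteq>T" and Mup: "\<forall>A\<in>M. \<forall>B\<in>T. A\<subseteq>B\<longrightarrow>B\<in>M" and Mint: "\<forall>A\<in>M. \<forall>B\<in>M. A\<inter>B\<in>M"
    and UM: "U\<in>M" and MI: "M\<inter>I={}" using MF unfolding FF_def by blast+
  have gen: "\<exists>P\<in>M. P\<inter>A \<in> I" if AT: "A\<in>T" and AM: "A\<notin>M" for A
  proof (rule ccontr)
    assume nn: "\<not> ?thesis"
    define q where "q = {Z\<in>T. \<exists>P\<in>M. P\<inter>A \<subseteq> Z}"
    have "q \<in> FF" unfolding FF_def
    proof (rule CollectI, intro conjI ballI impI)
      show "q\<subseteq>T" unfolding q_def by blast
      show "U\<in>q" using UM UT unfolding q_def by blast
    next
      fix X Y assume "X\<in>q" "Y\<in>T" "X\<subseteq>Y" then show "Y\<in>q" unfolding q_def by blast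
    next
      fix X Y assume "X\<in>q" "Y\<in>q"
      then obtain P1 P2 where "P1\<in>M" "P2\<in>M" "P1\<inter>A\<subseteq>X" "P2\<inter>A\<subseteq>Y" "X\<in>T" "Y\<in>T" unfolding q_def by blast
      moreover have "P1\<inter>P2 \<in> M" using Mint \<open>P1\<in>M\<close> \<open>P2\<in>M\<close> by blast
      moreover have "X\<inter>Y \<in> T" using cl \<open>X\<in>T\<close> \<open>Y\<in>T\<close> by blast
      ultimately show "X\<inter>Y\<in>q" unfolding q_def by blast
    next
      show "q \<inter> I = {}"
      proof (rule ccontr)
        assume "q\<inter>I \<noteq> {}"
        then obtain Z P where "Z\<in>I" "P\<in>M" "P\<inter>A\<subseteq>Z" unfolding q_def by blast
        moreover have "P\<inter>A\<in>T" using \<open>P\<in>M\<close> MT AT cl by blast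
        ultimately have "P\<inter>A\<in>I" using down by blast
        then show False using nn \<open>P\<in>M\<close> by blast
      qed
    qed
    moreover have "M \<subseteq> q" unfolding q_def using MT by blast
    moreover have "A \<in> q" unfolding q_def using UM AT by blast
    ultimately show False using mx AM by blast
  qed
  have "pf T M" unfolding pf_def
  proof (intro conjI ballI impI)
    show "M\<subseteq>T" by fact
    show "{} \<notin> M" using MI e by blast
  next
    fix A B assume "A\<in>M" "B\<in>T" "A\<subseteq>B" then show "B\<in>M" using Mup by blast
  next
    fix A B assume "A\<in>M" "B\<in>M" then show "A\<inter>B\<in>M" using Mint by blast
  next
    fix A B assume AT: "A\<in>T" and BT: "B\<in>T" and ABM: "A\<union>B\<in>M"
    show "A\<in>M \<or> B\<in>M"
    proof (rule ccontr)
      assume nAB: "\<not> (A\<in>M \<or> B\<in>M)"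
      obtain P1 where P1: "P1\<in>M" "P1\<inter>A\<in>I" using gen[OF AT] nAB by blast
      obtain P2 where P2: "P2\<in>M" "P2\<inter>B\<in>I" using gen[OF BT] nAB by blast
      note P = P1 P2
      define P where "P = P1\<inter>P2\<inter>(A\<union>B)"
      have PM: "P\<in>M" unfolding P_def using Mint[rule_format, OF Mint[rule_format, OF P1(1) P2(1)] ABM] .
      have PT: "P\<in>T" using PM MT by blast
      have PAT: "P\<inter>A \<in> T" using cl[rule_format, OF PT AT] by (rule conjunct2)
      have PBT: "P\<inter>B \<in> T" using cl[rule_format, OF PT BT] by (rule conjunct2)
      have s1: "P\<inter>A \<subseteq> P1\<inter>A" unfolding P_def by blast
      have s2: "P\<inter>B \<subseteq> P2\<inter>B" unfolding P_def by blast
      have i1: "P\<inter>A \<in> I" using down[rule_format, OF P1(2) PAT s1] .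
      have i2: "P\<inter>B \<in> I" using down[rule_format, OF P2(2) PBT s2] .
      have "(P\<inter>A)\<union>(P\<inter>B) \<in> I" using un[rule_format, OF i1 i2] .
      moreover have "(P\<inter>A)\<union>(P\<inter>B) = P" unfolding P_def by blast
      ultimately have "P \<in> I" by simp
      then show False using PM MI by blast
    qed
  qed
  then show ?thesis using UM MI by blast
qed




lemma klin_closed: "klinear K M N f \<Longrightarrow> x \<in> carrier M \<Longrightarrow> f x \<in> carrier N"
  unfolding klinear_def by blast
lemma klin_add: "klinear K M N f \<Longrightarrow> x \<in> carrier M \<Longrightarrow> y \<in> carrier M \<Longrightarrow> f (x \<oplus>\<^bsub>M\<^esub> y) = f x \<oplus>\<^bsub>N\<^esub> f y"
  unfolding klinear_def by blast
lemma klin_smult: "klinear K M N f \<Longrightarrow> a \<in> carrier K \<Longrightarrow> x \<in> carrier M \<Longrightarrow> f (a \<odot>\<^bsub>M\<^esub> x) = a \<odot>\<^bsub>N\<^esub> f x"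
  unfolding klinear_def by blast

lemma klin_zero:
  assumes "module K M" "module K N" "klinear K M N f"
  shows "f \<zero>\<^bsub>M\<^esub> = \<zero>\<^bsub>N\<^esub>"
proof -
  interpret M: module K M by fact
  interpret N: module K N by fact
  have "f \<zero>\<^bsub>M\<^esub> = f (\<zero>\<^bsub>K\<^esub> \<odot>\<^bsub>M\<^esub> \<zero>\<^bsub>M\<^esub>)" by simp
  also have "\<dots> = \<zero>\<^bsub>K\<^esub> \<odot>\<^bsub>N\<^esub> f \<zero>\<^bsub>M\<^esub>" using klin_smult[OF assms(3), of "\<zero>\<^bsub>K\<^esub>" "\<zero>\<^bsub>M\<^esub>"] by simp
  also have "\<dots> = \<zero>\<^bsub>N\<^esub>" using klin_closed[OF assms(3)] by simp
  finally show ?thesis .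
qed

lemma klin_minus:
  assumes "module K M" "module K N" "klinear K M N f" "x \<in> carrier M"
  shows "f (\<ominus>\<^bsub>M\<^esub> x) = \<ominus>\<^bsub>N\<^esub> f x"
proof -
  interpret M: module K M by fact
  interpret N: module K N by fact
  have "f (\<ominus>\<^bsub>M\<^esub> x) = f ((\<ominus>\<^bsub>K\<^esub> \<one>\<^bsub>K\<^esub>) \<odot>\<^bsub>M\<^esub> x)" using assms(4) M.smult_l_minus by simp
  also have "\<dots> = (\<ominus>\<^bsub>K\<^esub> \<one>\<^bsub>K\<^esub>) \<odot>\<^bsub>N\<^esub> f x" using klin_smult[OF assms(3)] assms(4) by simp
  also have "\<dots> = \<ominus>\<^bsub>N\<^esub> f x" using klin_closed[OF assms(3) assms(4)] N.smult_l_minus by simp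
  finally show ?thesis .
qed

lemma klin_diff:
  assumes "module K M" "module K N" "klinear K M N f" "x \<in> carrier M" "y \<in> carrier M"
  shows "f (x \<ominus>\<^bsub>M\<^esub> y) = f x \<ominus>\<^bsub>N\<^esub> f y"
proof -
  interpret M: module K M by fact
  show ?thesis unfolding a_minus_def
    using klin_add[OF assms(3)] klin_minus[OF assms(1-3)] assms(4,5) by simp
qed

lemma klin_id: "module K M \<Longrightarrow> klinear K M M (\<lambda>x. x)"
  unfolding klinear_def by auto




lemma pfD:
  assumes "pf T p"
  shows "p \<subseteq> T" "{} \<notin> p" "\<And>A B. A\<in>p \<Longrightarrow> B\<in>T \<Longrightarrow> A\<subseteq>B \<Longrightarrow> B\<in>p" "\<And>A B. A\<in>p \<Longrightarrow> B\<in>p \<Longrightarrow> A\<inter>B\<in>p"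
    "\<And>A B. A\<in>T \<Longrightarrow> B\<in>T \<Longrightarrow> A\<union>B\<in>p \<Longrightarrow> A\<in>p \<or> B\<in>p"
  using assms unfolding pf_def by blast+

locale tsh =
  fixes K :: "'k ring" and T :: "'a set set" and F :: "('a,'k,'v) kpsh"
  assumes fieldK: "field K"
    and clU: "\<And>A B. A\<in>T \<Longrightarrow> B\<in>T \<Longrightarrow> A\<union>B\<in>T"
    and clI: "\<And>A B. A\<in>T \<Longrightarrow> B\<in>T \<Longrightarrow> A\<inter>B\<in>T"
    and eT: "{}\<in>T"
    and sh: "is_ksheaf K T F"
begin

lemmas shs = sh[unfolded is_ksheaf_def]
lemma modM: "U\<in>T \<Longrightarrow> module K (sect F U)"
  using shs[THEN conjunct1] by blast
lemma linr: "U\<in>T \<Longrightarrow> V\<in>T \<Longrightarrow> U\<subseteq>V \<Longrightarrow> klinear K (sect F V) (sect F U) (rest F V U)"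
  using shs[THEN conjunct2, THEN conjunct1] by blast
lemma rid: "U\<in>T \<Longrightarrow> s\<in>carrier (sect F U) \<Longrightarrow> rest F U U s = s"
  using shs[THEN conjunct2, THEN conjunct2, THEN conjunct1] by blast
lemma rcomp: "U\<in>T \<Longrightarrow> V\<in>T \<Longrightarrow> W\<in>T \<Longrightarrow> U\<subseteq>V \<Longrightarrow> V\<subseteq>W \<Longrightarrow> s\<in>carrier (sect F W) \<Longrightarrow>
   rest F V U (rest F W V s) = rest F W U s"
  using shs[THEN conjunct2, THEN conjunct2, THEN conjunct2, THEN conjunct1] by blast
lemma rcl: "U\<in>T \<Longrightarrow> V\<in>T \<Longrightarrow> U\<subseteq>V \<Longrightarrow> s\<in>carrier (sect F V) \<Longrightarrow> rest F V U s \<in> carrier (sect F U)"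
  by (rule klin_closed[OF linr])
lemma radd: "U\<in>T \<Longrightarrow> V\<in>T \<Longrightarrow> U\<subseteq>V \<Longrightarrow> s\<in>carrier (sect F V) \<Longrightarrow> t\<in>carrier (sect F V) \<Longrightarrow>
   rest F V U (s \<oplus>\<^bsub>sect F V\<^esub> t) = rest F V U s \<oplus>\<^bsub>sect F U\<^esub> rest F V U t"
  by (rule klin_add[OF linr])
lemma rsmult: "U\<in>T \<Longrightarrow> V\<in>T \<Longrightarrow> U\<subseteq>V \<Longrightarrow> a \<in> carrier K \<Longrightarrow> s\<in>carrier (sect F V) \<Longrightarrow>
   rest F V U (a \<odot>\<^bsub>sect F V\<^esub> s) = a \<odot>\<^bsub>sect F U\<^esub> rest F V U s"
  by (rule klin_smult[OF linr])
lemma rzero: "U\<in>T \<Longrightarrow> V\<in>T \<Longrightarrow> U\<subseteq>V \<Longrightarrow> rest F V U \<zero>\<^bsub>sect F V\<^esub> = \<zero>\<^bsub>sect F U\<^esub>"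
  by (rule klin_zero[OF modM modM linr])
lemma rminus: "U\<in>T \<Longrightarrow> V\<in>T \<Longrightarrow> U\<subseteq>V \<Longrightarrow> s\<in>carrier (sect F V) \<Longrightarrow>
   rest F V U (\<ominus>\<^bsub>sect F V\<^esub> s) = \<ominus>\<^bsub>sect F U\<^esub> rest F V U s"
  by (rule klin_minus[OF modM modM linr])
lemma sep: "U\<in>T \<Longrightarrow> tcovering T C U \<Longrightarrow> s\<in>carrier (sect F U) \<Longrightarrow> t\<in>carrier (sect F U) \<Longrightarrow>
   (\<forall>W\<in>C. rest F U W s = rest F U W t) \<Longrightarrow> s = t"
  using shs[THEN conjunct2, THEN conjunct2, THEN conjunct2, THEN conjunct2] by blast
lemma glue: "U\<in>T \<Longrightarrow> tcovering T C U \<Longrightarrow> (\<forall>W\<in>C. f W \<in> carrier (sect F W)) \<Longrightarrow>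
   (\<forall>W1\<in>C. \<forall>W2\<in>C. rest F W1 (W1\<inter>W2) (f W1) = rest F W2 (W1\<inter>W2) (f W2)) \<Longrightarrow>
   \<exists>s\<in>carrier (sect F U). \<forall>W\<in>C. rest F U W s = f W"
proof -
  assume a: "U\<in>T" "tcovering T C U" "\<forall>W\<in>C. f W \<in> carrier (sect F W)"
    "\<forall>W1\<in>C. \<forall>W2\<in>C. rest F W1 (W1\<inter>W2) (f W1) = rest F W2 (W1\<inter>W2) (f W2)"
  have "\<forall>U\<in>T. \<forall>C. tcovering T C U \<longrightarrow> (\<forall>f. (\<forall>W\<in>C. f W \<in> carrier (sect F W)) \<and>
             (\<forall>W1\<in>C. \<forall>W2\<in>C. rest F W1 (W1 \<inter> W2) (f W1) = rest F W2 (W1 \<inter> W2) (f W2)) \<longrightarrow>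
             (\<exists>s\<in>carrier (sect F U). \<forall>W\<in>C. rest F U W s = f W))"
    using shs[THEN conjunct2, THEN conjunct2, THEN conjunct2, THEN conjunct2] by blast
  then show ?thesis using a by blast
qed

lemma empty_single: "s\<in>carrier (sect F {}) \<Longrightarrow> t\<in>carrier (sect F {}) \<Longrightarrow> s = t"
  by (rule sep[of "{}" "{}"]) (auto simp: tcovering_def eT)

definition germ :: "'a set set \<Rightarrow> 'a set \<Rightarrow> 'v \<Rightarrow> ('a set \<times> 'v) set" where
  "germ p W v = {(W',v'). W'\<in>p \<and> v'\<in>carrier (sect F W') \<and> (\<exists>Z\<in>p. Z\<subseteq>W\<inter>W' \<and> rest F W' Z v' = rest F W Z v)}"

lemma germ_sub:
  assumes p: "pf T p" and W: "W1\<in>p" "W2\<in>p" "v1\<in>carrier (sect F W1)" "v2\<in>carrier (sect F W2)"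
    and Z: "Z\<in>p" "Z\<subseteq>W1\<inter>W2" "rest F W1 Z v1 = rest F W2 Z v2"
    and x: "x \<in> germ p W1 v1"
  shows "x \<in> germ p W2 v2"
proof -
  obtain W' v' where x': "x = (W',v')" by (cases x)
  with x obtain Z' where Z': "W'\<in>p" "v'\<in>carrier (sect F W')" "Z'\<in>p" "Z'\<subseteq>W1\<inter>W'" "rest F W' Z' v' = rest F W1 Z' v1"
    unfolding germ_def by blast
  note pT = pfD(1)[OF p]
  define Y where "Y = Z\<inter>Z'"
  have Yp: "Y\<in>p" unfolding Y_def using pfD(4)[OF p Z(1) Z'(3)] .
  have YT: "Y\<in>T" "Z\<in>T" "Z'\<in>T" "W1\<in>T" "W2\<in>T" "W'\<in>T" using Yp Z(1) Z'(3) W Z'(1) pT by auto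
  have sub: "Y\<subseteq>Z" "Y\<subseteq>Z'" "Z\<subseteq>W1" "Z\<subseteq>W2" "Z'\<subseteq>W1" "Z'\<subseteq>W'" "Y \<subseteq> W2\<inter>W'"
    unfolding Y_def using Z(2) Z'(4) by auto
  have "rest F W' Y v' = rest F Z' Y (rest F W' Z' v')" using rcomp[OF YT(1) YT(3) YT(6) sub(2) sub(6) Z'(2)] by simp
  also have "\<dots> = rest F Z' Y (rest F W1 Z' v1)" using Z'(5) by simp
  also have "\<dots> = rest F W1 Y v1" using rcomp[OF YT(1) YT(3) YT(4) sub(2) sub(5) W(3)] .
  also have "\<dots> = rest F Z Y (rest F W1 Z v1)" using rcomp[OF YT(1) YT(2) YT(4) sub(1) sub(3) W(3)] by simp
  also have "\<dots> = rest F Z Y (rest F W2 Z v2)" using Z(3) by simp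
  also have "\<dots> = rest F W2 Y v2" using rcomp[OF YT(1) YT(2) YT(5) sub(1) sub(4) W(4)] .
  finally show ?thesis unfolding x' germ_def using Z'(1,2) Yp sub(7) by blast
qed

lemma germ_eqI:
  assumes p: "pf T p" and W: "W1\<in>p" "W2\<in>p" "v1\<in>carrier (sect F W1)" "v2\<in>carrier (sect F W2)"
    and Z: "Z\<in>p" "Z\<subseteq>W1\<inter>W2" "rest F W1 Z v1 = rest F W2 Z v2"
  shows "germ p W1 v1 = germ p W2 v2"
proof
  show "germ p W1 v1 \<subseteq> germ p W2 v2" using germ_sub[OF p W Z] by blast
  have "Z\<subseteq>W2\<inter>W1" using Z(2) by blast
  then show "germ p W2 v2 \<subseteq> germ p W1 v1" using germ_sub[OF p W(2,1,4,3) Z(1) _ Z(3)[symmetric]] by blast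
qed

lemma germ_self: "W\<in>p \<Longrightarrow> v\<in>carrier (sect F W) \<Longrightarrow> (W,v) \<in> germ p W v"
  unfolding germ_def by blast

lemma germ_eqD:
  assumes W: "W1\<in>p" "W2\<in>p" "v1\<in>carrier (sect F W1)" "v2\<in>carrier (sect F W2)"
    and e: "germ p W1 v1 = germ p W2 v2"
  shows "\<exists>Z\<in>p. Z\<subseteq>W1\<inter>W2 \<and> rest F W1 Z v1 = rest F W2 Z v2"
proof -
  have "(W1,v1) \<in> germ p W2 v2" using germ_self[OF W(1,3)] e by simp
  then obtain Z where "Z\<in>p" "Z\<subseteq>W2\<inter>W1" "rest F W1 Z v1 = rest F W2 Z v2" unfolding germ_def by blast
  then show ?thesis by blast
qed

lemma germ_restr:
  assumes p: "pf T p" and "W\<in>p" "Z\<in>p" "Z\<subseteq>W" "v\<in>carrier (sect F W)"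
  shows "germ p W v = germ p Z (rest F W Z v)"
proof -
  have T: "W\<in>T" "Z\<in>T" using assms pfD(1)[OF p] by auto
  have c: "rest F W Z v \<in> carrier (sect F Z)" using rcl[OF T(2) T(1) assms(4,5)] .
  show ?thesis
    by (rule germ_eqI[OF p assms(2,3,5) c assms(3)]) (use assms(4) rid[OF T(2) c] in auto)
qed

end



context tsh begin

definition S :: "'a set set \<Rightarrow> ('a set \<times> 'v) set set" where
  "S p = {g. \<exists>W v. W\<in>p \<and> v\<in>carrier (sect F W) \<and> g = germ p W v}"

definition rp :: "'a set set \<Rightarrow> ('a set \<times> 'v) set \<Rightarrow> 'a set \<times> 'v" where
  "rp p g = (SOME x. fst x \<in> p \<and> snd x \<in> carrier (sect F (fst x)) \<and> g = germ p (fst x) (snd x))"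

lemma rpI: assumes "g \<in> S p"
  shows "fst (rp p g) \<in> p" "snd (rp p g) \<in> carrier (sect F (fst (rp p g)))" "g = germ p (fst (rp p g)) (snd (rp p g))"
proof -
  from assms obtain W v where "W\<in>p" "v\<in>carrier (sect F W)" "g = germ p W v" unfolding S_def by blast
  then have "\<exists>x. fst x \<in> p \<and> snd x \<in> carrier (sect F (fst x)) \<and> g = germ p (fst x) (snd x)"
    by (intro exI[of _ "(W,v)"]) simp
  from someI_ex[OF this] show "fst (rp p g) \<in> p" "snd (rp p g) \<in> carrier (sect F (fst (rp p g)))" "g = germ p (fst (rp p g)) (snd (rp p g))"
    unfolding rp_def by blast+
qed

lemma germ_S: "W\<in>p \<Longrightarrow> v\<in>carrier (sect F W) \<Longrightarrow> germ p W v \<in> S p"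
  unfolding S_def by blast

definition gadd :: "'a set set \<Rightarrow> ('a set \<times> 'v) set \<Rightarrow> ('a set \<times> 'v) set \<Rightarrow> ('a set \<times> 'v) set" where
  "gadd p g h = (let W1 = fst (rp p g); v1 = snd (rp p g); W2 = fst (rp p h); v2 = snd (rp p h); W = W1\<inter>W2
      in germ p W (rest F W1 W v1 \<oplus>\<^bsub>sect F W\<^esub> rest F W2 W v2))"

definition gsm :: "'a set set \<Rightarrow> 'k \<Rightarrow> ('a set \<times> 'v) set \<Rightarrow> ('a set \<times> 'v) set" where
  "gsm p a g = germ p (fst (rp p g)) (a \<odot>\<^bsub>sect F (fst (rp p g))\<^esub> snd (rp p g))"

definition gz :: "'a set set \<Rightarrow> ('a set \<times> 'v) set" where
  "gz p = germ p (SOME W. W\<in>p) \<zero>\<^bsub>sect F (SOME W. W\<in>p)\<^esub>"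

lemma rp_agree:
  assumes p: "pf T p" and W: "W\<in>p" "v\<in>carrier (sect F W)"
  obtains Z where "Z\<in>p" "Z \<subseteq> W \<inter> fst (rp p (germ p W v))"
    "rest F (fst (rp p (germ p W v))) Z (snd (rp p (germ p W v))) = rest F W Z v"
proof -
  let ?g = "germ p W v"
  have g: "?g \<in> S p" using germ_S[OF W] .
  note R = rpI[OF g]
  from germ_eqD[OF R(1) W(1) R(2) W(2) R(3)[symmetric]] obtain Z where
    "Z\<in>p" "Z \<subseteq> fst (rp p ?g) \<inter> W" "rest F (fst (rp p ?g)) Z (snd (rp p ?g)) = rest F W Z v" by blast
  then show ?thesis using that by blast
qed

lemma germ_add:
  assumes p: "pf T p" and W: "W\<in>p" and v: "v1\<in>carrier (sect F W)" "v2\<in>carrier (sect F W)"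
  shows "gadd p (germ p W v1) (germ p W v2) = germ p W (v1 \<oplus>\<^bsub>sect F W\<^esub> v2)"
proof -
  note pT = pfD(1)[OF p]
  define W1 where "W1 = fst (rp p (germ p W v1))"
  define u1 where "u1 = snd (rp p (germ p W v1))"
  define W2 where "W2 = fst (rp p (germ p W v2))"
  define u2 where "u2 = snd (rp p (germ p W v2))"
  note R1 = rpI[OF germ_S[OF W v(1)], folded W1_def u1_def]
  note R2 = rpI[OF germ_S[OF W v(2)], folded W2_def u2_def]
  obtain Z1 where Z1: "Z1\<in>p" "Z1 \<subseteq> W \<inter> W1" "rest F W1 Z1 u1 = rest F W Z1 v1"
    using rp_agree[OF p W v(1)] unfolding W1_def u1_def by blast
  obtain Z2 where Z2: "Z2\<in>p" "Z2 \<subseteq> W \<inter> W2" "rest F W2 Z2 u2 = rest F W Z2 v2"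
    using rp_agree[OF p W v(2)] unfolding W2_def u2_def by blast
  define W12 where "W12 = W1 \<inter> W2"
  define Z where "Z = Z1 \<inter> Z2"
  have Zp: "Z\<in>p" unfolding Z_def by (rule pfD(4)[OF p Z1(1) Z2(1)])
  have W12p: "W12\<in>p" unfolding W12_def by (rule pfD(4)[OF p R1(1) R2(1)])
  have T: "W\<in>T" "W1\<in>T" "W2\<in>T" "W12\<in>T" "Z\<in>T" "Z1\<in>T" "Z2\<in>T"
    using W R1(1) R2(1) W12p Zp Z1(1) Z2(1) pT by auto
  have sub: "Z\<subseteq>W12" "W12\<subseteq>W1" "W12\<subseteq>W2" "Z\<subseteq>W" "Z\<subseteq>Z1" "Z\<subseteq>Z2" "Z1\<subseteq>W1" "Z2\<subseteq>W2" "Z1\<subseteq>W" "Z2\<subseteq>W"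
    using Z1(2) Z2(2) unfolding Z_def W12_def by auto
  interpret M12: module K "sect F W12" by (rule modM[OF T(4)])
  interpret MW: module K "sect F W" by (rule modM[OF T(1)])
  have c1: "rest F W1 W12 u1 \<in> carrier (sect F W12)" by (rule rcl[OF T(4) T(2) sub(2) R1(2)])
  have c2: "rest F W2 W12 u2 \<in> carrier (sect F W12)" by (rule rcl[OF T(4) T(3) sub(3) R2(2)])
  have e1: "rest F W1 Z u1 = rest F W Z v1"
  proof -
    have "rest F W1 Z u1 = rest F Z1 Z (rest F W1 Z1 u1)" using rcomp[OF T(5) T(6) T(2) sub(5) sub(7) R1(2)] by simp
    also have "\<dots> = rest F Z1 Z (rest F W Z1 v1)" using Z1(3) by simp
    also have "\<dots> = rest F W Z v1" using rcomp[OF T(5) T(6) T(1) sub(5) sub(9) v(1)] .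
    finally show ?thesis .
  qed
  have e2: "rest F W2 Z u2 = rest F W Z v2"
  proof -
    have "rest F W2 Z u2 = rest F Z2 Z (rest F W2 Z2 u2)" using rcomp[OF T(5) T(7) T(3) sub(6) sub(8) R2(2)] by simp
    also have "\<dots> = rest F Z2 Z (rest F W Z2 v2)" using Z2(3) by simp
    also have "\<dots> = rest F W Z v2" using rcomp[OF T(5) T(7) T(1) sub(6) sub(10) v(2)] .
    finally show ?thesis .
  qed
  have "gadd p (germ p W v1) (germ p W v2) = germ p W12 (rest F W1 W12 u1 \<oplus>\<^bsub>sect F W12\<^esub> rest F W2 W12 u2)"
    unfolding gadd_def W1_def u1_def W2_def u2_def W12_def Let_def by simp
  also have "\<dots> = germ p W (v1 \<oplus>\<^bsub>sect F W\<^esub> v2)"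
  proof (rule germ_eqI[OF p W12p W _ _ Zp])
    show "rest F W1 W12 u1 \<oplus>\<^bsub>sect F W12\<^esub> rest F W2 W12 u2 \<in> carrier (sect F W12)" using c1 c2 by simp
    show "v1 \<oplus>\<^bsub>sect F W\<^esub> v2 \<in> carrier (sect F W)" using v by simp
    show "Z \<subseteq> W12 \<inter> W" using sub by auto
    have "rest F W12 Z (rest F W1 W12 u1 \<oplus>\<^bsub>sect F W12\<^esub> rest F W2 W12 u2)
        = rest F W12 Z (rest F W1 W12 u1) \<oplus>\<^bsub>sect F Z\<^esub> rest F W12 Z (rest F W2 W12 u2)"
      by (rule radd[OF T(5) T(4) sub(1) c1 c2])
    also have "\<dots> = rest F W1 Z u1 \<oplus>\<^bsub>sect F Z\<^esub> rest F W2 Z u2"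
      using rcomp[OF T(5) T(4) T(2) sub(1) sub(2) R1(2)] rcomp[OF T(5) T(4) T(3) sub(1) sub(3) R2(2)] by simp
    also have "\<dots> = rest F W Z v1 \<oplus>\<^bsub>sect F Z\<^esub> rest F W Z v2" using e1 e2 by simp
    also have "\<dots> = rest F W Z (v1 \<oplus>\<^bsub>sect F W\<^esub> v2)" using radd[OF T(5) T(1) sub(4) v] by simp
    finally show "rest F W12 Z (rest F W1 W12 u1 \<oplus>\<^bsub>sect F W12\<^esub> rest F W2 W12 u2) = rest F W Z (v1 \<oplus>\<^bsub>sect F W\<^esub> v2)" .
  qed
  finally show ?thesis .
qed

lemma germ_smult:
  assumes p: "pf T p" and W: "W\<in>p" and v: "v\<in>carrier (sect F W)" and a: "a \<in> carrier K"
  shows "gsm p a (germ p W v) = germ p W (a \<odot>\<^bsub>sect F W\<^esub> v)"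
proof -
  note pT = pfD(1)[OF p]
  define W1 where "W1 = fst (rp p (germ p W v))"
  define u1 where "u1 = snd (rp p (germ p W v))"
  note R1 = rpI[OF germ_S[OF W v], folded W1_def u1_def]
  obtain Z where Z: "Z\<in>p" "Z \<subseteq> W \<inter> W1" "rest F W1 Z u1 = rest F W Z v"
    using rp_agree[OF p W v] unfolding W1_def u1_def by blast
  have T: "W\<in>T" "W1\<in>T" "Z\<in>T" using W R1(1) Z(1) pT by auto
  have sub: "Z\<subseteq>W" "Z\<subseteq>W1" using Z(2) by auto
  interpret M1: module K "sect F W1" by (rule modM[OF T(2)])
  interpret MW: module K "sect F W" by (rule modM[OF T(1)])
  have "gsm p a (germ p W v) = germ p W1 (a \<odot>\<^bsub>sect F W1\<^esub> u1)"
    unfolding gsm_def W1_def u1_def by simp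
  also have "\<dots> = germ p W (a \<odot>\<^bsub>sect F W\<^esub> v)"
  proof (rule germ_eqI[OF p R1(1) W _ _ Z(1)])
    show "a \<odot>\<^bsub>sect F W1\<^esub> u1 \<in> carrier (sect F W1)" using a R1(2) by simp
    show "a \<odot>\<^bsub>sect F W\<^esub> v \<in> carrier (sect F W)" using a v by simp
    show "Z \<subseteq> W1 \<inter> W" using sub by auto
    show "rest F W1 Z (a \<odot>\<^bsub>sect F W1\<^esub> u1) = rest F W Z (a \<odot>\<^bsub>sect F W\<^esub> v)"
      using rsmult[OF T(3) T(2) sub(2) a R1(2)] rsmult[OF T(3) T(1) sub(1) a v] Z(3) by simp
  qed
  finally show ?thesis .
qed

lemma germ_zero:
  assumes p: "pf T p" and W: "W\<in>p"
  shows "gz p = germ p W \<zero>\<^bsub>sect F W\<^esub>"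
proof -
  note pT = pfD(1)[OF p]
  define W0 where "W0 = (SOME W. W\<in>p)"
  have W0: "W0\<in>p" unfolding W0_def using W by (rule someI)
  define Z where "Z = W0 \<inter> W"
  have Zp: "Z\<in>p" unfolding Z_def by (rule pfD(4)[OF p W0 W])
  have T: "W\<in>T" "W0\<in>T" "Z\<in>T" using W W0 Zp pT by auto
  interpret M0: module K "sect F W0" by (rule modM[OF T(2)])
  interpret MW: module K "sect F W" by (rule modM[OF T(1)])
  have sub: "Z\<subseteq>W0" "Z\<subseteq>W" "Z\<subseteq>W0\<inter>W" unfolding Z_def by auto
  show ?thesis unfolding gz_def W0_def[symmetric]
    by (rule germ_eqI[OF p W0 W _ _ Zp sub(3)]) (auto simp: rzero[OF T(3) T(2) sub(1)] rzero[OF T(3) T(1) sub(2)])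
qed

lemma common3:
  assumes p: "pf T p" and g: "g1 \<in> S p" "g2 \<in> S p" "g3 \<in> S p"
  obtains W v1 v2 v3 where "W\<in>p" "v1\<in>carrier (sect F W)" "v2\<in>carrier (sect F W)" "v3\<in>carrier (sect F W)"
    "g1 = germ p W v1" "g2 = germ p W v2" "g3 = germ p W v3"
proof -
  note pT = pfD(1)[OF p]
  from g(1) obtain W1 u1 where 1: "W1\<in>p" "u1\<in>carrier (sect F W1)" "g1 = germ p W1 u1" unfolding S_def by blast
  from g(2) obtain W2 u2 where 2: "W2\<in>p" "u2\<in>carrier (sect F W2)" "g2 = germ p W2 u2" unfolding S_def by blast
  from g(3) obtain W3 u3 where 3: "W3\<in>p" "u3\<in>carrier (sect F W3)" "g3 = germ p W3 u3" unfolding S_def by blast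
  define W where "W = W1 \<inter> W2 \<inter> W3"
  have Wp: "W\<in>p" unfolding W_def by (rule pfD(4)[OF p pfD(4)[OF p 1(1) 2(1)] 3(1)])
  have T: "W\<in>T" "W1\<in>T" "W2\<in>T" "W3\<in>T" using Wp 1(1) 2(1) 3(1) pT by auto
  have sub: "W\<subseteq>W1" "W\<subseteq>W2" "W\<subseteq>W3" unfolding W_def by auto
  show ?thesis
  proof (rule that[OF Wp rcl[OF T(1) T(2) sub(1) 1(2)] rcl[OF T(1) T(3) sub(2) 2(2)] rcl[OF T(1) T(4) sub(3) 3(2)]])
    show "g1 = germ p W (rest F W1 W u1)" using germ_restr[OF p 1(1) Wp sub(1) 1(2)] 1(3) by simp
    show "g2 = germ p W (rest F W2 W u2)" using germ_restr[OF p 2(1) Wp sub(2) 2(2)] 2(3) by simp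
    show "g3 = germ p W (rest F W3 W u3)" using germ_restr[OF p 3(1) Wp sub(3) 3(2)] 3(3) by simp
  qed
qed

end



context tsh begin

lemma S_ops:
  assumes p: "pf T p" and g: "g1 \<in> S p" "g2 \<in> S p" "g3 \<in> S p" and a: "a\<in>carrier K" "b\<in>carrier K"
  shows "gadd p g1 g2 \<in> S p"
    and "gadd p (gadd p g1 g2) g3 = gadd p g1 (gadd p g2 g3)"
    and "gadd p g1 g2 = gadd p g2 g1"
    and "gz p \<in> S p"
    and "gadd p (gz p) g1 = g1"
    and "\<exists>h\<in>S p. gadd p h g1 = gz p"
    and "gsm p a g1 \<in> S p"
    and "gsm p (a \<oplus>\<^bsub>K\<^esub> b) g1 = gadd p (gsm p a g1) (gsm p b g1)"
    and "gsm p a (gadd p g1 g2) = gadd p (gsm p a g1) (gsm p a g2)"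
    and "gsm p (a \<otimes>\<^bsub>K\<^esub> b) g1 = gsm p a (gsm p b g1)"
    and "gsm p \<one>\<^bsub>K\<^esub> g1 = g1"
proof -
  obtain W v1 v2 v3 where W: "W\<in>p" "v1\<in>carrier (sect F W)" "v2\<in>carrier (sect F W)" "v3\<in>carrier (sect F W)"
    and e: "g1 = germ p W v1" "g2 = germ p W v2" "g3 = germ p W v3"
    using common3[OF p g] by blast
  have WT: "W\<in>T" using W(1) pfD(1)[OF p] by auto
  interpret MW: module K "sect F W" by (rule modM[OF WT])
  note ga = germ_add[OF p W(1)] and gs = germ_smult[OF p W(1)] and gzz = germ_zero[OF p W(1)]
  note gS = germ_S[OF W(1)]
  show "gadd p g1 g2 \<in> S p" unfolding e using ga gS W by simp
  show "gadd p (gadd p g1 g2) g3 = gadd p g1 (gadd p g2 g3)" unfolding e using ga W by (simp add: MW.a_assoc)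
  show "gadd p g1 g2 = gadd p g2 g1" unfolding e using ga W by (simp add: MW.a_comm)
  show "gz p \<in> S p" unfolding gzz using gS by simp
  show "gadd p (gz p) g1 = g1" unfolding e gzz using ga W by simp
  show "\<exists>h\<in>S p. gadd p h g1 = gz p"
  proof (rule bexI[of _ "germ p W (\<ominus>\<^bsub>sect F W\<^esub> v1)"])
    show "germ p W (\<ominus>\<^bsub>sect F W\<^esub> v1) \<in> S p" using gS W by simp
    show "gadd p (germ p W (\<ominus>\<^bsub>sect F W\<^esub> v1)) g1 = gz p" unfolding e gzz using ga W by (simp add: MW.l_neg)
  qed
  show "gsm p a g1 \<in> S p" unfolding e using gs gS W a by simp
  show "gsm p (a \<oplus>\<^bsub>K\<^esub> b) g1 = gadd p (gsm p a g1) (gsm p b g1)" unfolding e using ga gs W a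
    by (simp add: MW.smult_l_distr)
  show "gsm p a (gadd p g1 g2) = gadd p (gsm p a g1) (gsm p a g2)" unfolding e using ga gs W a
    by (simp add: MW.smult_r_distr)
  show "gsm p (a \<otimes>\<^bsub>K\<^esub> b) g1 = gsm p a (gsm p b g1)" unfolding e using gs W a
    by (simp add: MW.smult_assoc1)
  show "gsm p \<one>\<^bsub>K\<^esub> g1 = g1" unfolding e using gs W by simp
qed

lemma oneK: "\<one>\<^bsub>K\<^esub> \<in> carrier K"
proof -
  interpret K: field K by (rule fieldK)
  show ?thesis by simp
qed

lemma S_add: "pf T p \<Longrightarrow> g1 \<in> S p \<Longrightarrow> g2 \<in> S p \<Longrightarrow> gadd p g1 g2 \<in> S p"
  using S_ops(1)[OF _ _ _ _ oneK oneK] by blast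
lemma S_assoc: "pf T p \<Longrightarrow> g1 \<in> S p \<Longrightarrow> g2 \<in> S p \<Longrightarrow> g3 \<in> S p \<Longrightarrow> gadd p (gadd p g1 g2) g3 = gadd p g1 (gadd p g2 g3)"
  using S_ops(2)[OF _ _ _ _ oneK oneK] by blast
lemma S_comm: "pf T p \<Longrightarrow> g1 \<in> S p \<Longrightarrow> g2 \<in> S p \<Longrightarrow> gadd p g1 g2 = gadd p g2 g1"
  using S_ops(3)[OF _ _ _ _ oneK oneK] by blast
lemma S_lzero: "pf T p \<Longrightarrow> g1 \<in> S p \<Longrightarrow> gadd p (gz p) g1 = g1"
  using S_ops(5)[OF _ _ _ _ oneK oneK] by blast
lemma S_inv: "pf T p \<Longrightarrow> g1 \<in> S p \<Longrightarrow> \<exists>h\<in>S p. gadd p h g1 = gz p"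
  using S_ops(6)[OF _ _ _ _ oneK oneK] by blast
lemma S_sm: "pf T p \<Longrightarrow> g1 \<in> S p \<Longrightarrow> a \<in> carrier K \<Longrightarrow> gsm p a g1 \<in> S p"
  using S_ops(7)[OF _ _ _ _ _ oneK] by blast
lemma S_one: "pf T p \<Longrightarrow> g1 \<in> S p \<Longrightarrow> gsm p \<one>\<^bsub>K\<^esub> g1 = g1"
  using S_ops(11)[OF _ _ _ _ oneK oneK] by blast
lemma S_zero: assumes p: "pf T p" and W: "W \<in> p" shows "gz p \<in> S p"
proof -
  have WT: "W\<in>T" using W pfD(1)[OF p] by auto
  interpret MW: module K "sect F W" by (rule modM[OF WT])
  show ?thesis using germ_zero[OF p W] germ_S[OF W] by simp
qed

definition inP :: "'a set \<Rightarrow> 'a set set \<Rightarrow> bool" where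
  "inP U p \<longleftrightarrow> pf T p \<and> U \<in> p"

definition PP :: "'a set \<Rightarrow> ('k, 'a set set \<Rightarrow> ('a set \<times> 'v) set) module" where
  "PP U = \<lparr>carrier = {g. \<forall>p. (inP U p \<longrightarrow> g p \<in> S p) \<and> (\<not> inP U p \<longrightarrow> g p = {})},
     mult = (\<lambda>x y. x), one = (\<lambda>p. {}),
     zero = (\<lambda>p. if inP U p then gz p else {}),
     add = (\<lambda>g h p. if inP U p then gadd p (g p) (h p) else {}),
     smult = (\<lambda>a g p. if inP U p then gsm p a (g p) else {})\<rparr>"

lemma PP_simps:
  "carrier (PP U) = {g. \<forall>p. (inP U p \<longrightarrow> g p \<in> S p) \<and> (\<not> inP U p \<longrightarrow> g p = {})}"
  "\<zero>\<^bsub>PP U\<^esub> = (\<lambda>p. if inP U p then gz p else {})"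
  "g \<oplus>\<^bsub>PP U\<^esub> h = (\<lambda>p. if inP U p then gadd p (g p) (h p) else {})"
  "a \<odot>\<^bsub>PP U\<^esub> g = (\<lambda>p. if inP U p then gsm p a (g p) else {})"
  unfolding PP_def by simp_all

lemma PP_mem: "g \<in> carrier (PP U) \<Longrightarrow> inP U p \<Longrightarrow> g p \<in> S p"
  unfolding PP_simps by blast
lemma PP_out: "g \<in> carrier (PP U) \<Longrightarrow> \<not> inP U p \<Longrightarrow> g p = {}"
  unfolding PP_simps by blast
lemma PP_memI: "(\<And>p. inP U p \<Longrightarrow> g p \<in> S p) \<Longrightarrow> (\<And>p. \<not> inP U p \<Longrightarrow> g p = {}) \<Longrightarrow> g \<in> carrier (PP U)"
  unfolding PP_simps by blast

lemma inP_D: "inP U p \<Longrightarrow> pf T p" "inP U p \<Longrightarrow> U \<in> p"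
  unfolding inP_def by auto

lemma cringK: "cring K"
proof -
  interpret K: field K by (rule fieldK)
  show ?thesis by (rule K.is_cring)
qed

lemma module_PP: "module K (PP U)"
proof (rule moduleI[OF cringK])
  show "abelian_group (PP U)"
  proof (rule abelian_groupI)
    fix x y assume "x \<in> carrier (PP U)" "y \<in> carrier (PP U)"
    then show "x \<oplus>\<^bsub>PP U\<^esub> y \<in> carrier (PP U)"
      unfolding PP_simps(3) by (intro PP_memI) (auto intro: S_add inP_D PP_mem)
  next
    show "\<zero>\<^bsub>PP U\<^esub> \<in> carrier (PP U)"
      unfolding PP_simps(2) by (intro PP_memI) (auto intro: S_zero inP_D)
  next
    fix x y z assume xyz: "x \<in> carrier (PP U)" "y \<in> carrier (PP U)" "z \<in> carrier (PP U)"
    show "x \<oplus>\<^bsub>PP U\<^esub> y \<oplus>\<^bsub>PP U\<^esub> z = x \<oplus>\<^bsub>PP U\<^esub> (y \<oplus>\<^bsub>PP U\<^esub> z)"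
    proof
      fix p show "(x \<oplus>\<^bsub>PP U\<^esub> y \<oplus>\<^bsub>PP U\<^esub> z) p = (x \<oplus>\<^bsub>PP U\<^esub> (y \<oplus>\<^bsub>PP U\<^esub> z)) p"
        unfolding PP_simps(3) using S_assoc[OF inP_D(1) PP_mem[OF xyz(1)] PP_mem[OF xyz(2)] PP_mem[OF xyz(3)]]
        by (cases "inP U p") auto
    qed
  next
    fix x y assume xy: "x \<in> carrier (PP U)" "y \<in> carrier (PP U)"
    show "x \<oplus>\<^bsub>PP U\<^esub> y = y \<oplus>\<^bsub>PP U\<^esub> x"
    proof
      fix p show "(x \<oplus>\<^bsub>PP U\<^esub> y) p = (y \<oplus>\<^bsub>PP U\<^esub> x) p"
        unfolding PP_simps(3) using S_comm[OF inP_D(1) PP_mem[OF xy(1)] PP_mem[OF xy(2)]]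
        by (cases "inP U p") auto
    qed
  next
    fix x assume x: "x \<in> carrier (PP U)"
    show "\<zero>\<^bsub>PP U\<^esub> \<oplus>\<^bsub>PP U\<^esub> x = x"
    proof
      fix p show "(\<zero>\<^bsub>PP U\<^esub> \<oplus>\<^bsub>PP U\<^esub> x) p = x p"
        unfolding PP_simps(2,3) using S_lzero[OF inP_D(1) PP_mem[OF x]] PP_out[OF x] by (cases "inP U p") auto
    qed
  next
    fix x assume x: "x \<in> carrier (PP U)"
    define y where "y = (\<lambda>p. if inP U p then (SOME h. h \<in> S p \<and> gadd p h (x p) = gz p) else {})"
    have y: "inP U p \<Longrightarrow> y p \<in> S p \<and> gadd p (y p) (x p) = gz p" for p
    proof -
      assume pp: "inP U p"
      have "\<exists>h. h \<in> S p \<and> gadd p h (x p) = gz p" using S_inv[OF inP_D(1)[OF pp] PP_mem[OF x pp]] by blast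
      from someI_ex[OF this] show ?thesis unfolding y_def using pp by simp
    qed
    show "\<exists>y\<in>carrier (PP U). y \<oplus>\<^bsub>PP U\<^esub> x = \<zero>\<^bsub>PP U\<^esub>"
    proof (rule bexI[of _ y])
      show "y \<in> carrier (PP U)"
      proof (rule PP_memI)
        fix p assume "inP U p" then show "y p \<in> S p" using y by blast
      next
        fix p assume "\<not> inP U p" then show "y p = {}" unfolding y_def by simp
      qed
      show "y \<oplus>\<^bsub>PP U\<^esub> x = \<zero>\<^bsub>PP U\<^esub>"
      proof
        fix p show "(y \<oplus>\<^bsub>PP U\<^esub> x) p = \<zero>\<^bsub>PP U\<^esub> p" unfolding PP_simps(2,3) using y by (cases "inP U p") auto
      qed
    qed
  qed
next
  note ops = S_ops[OF inP_D(1)]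
  fix a x assume "a \<in> carrier K" "x \<in> carrier (PP U)"
  then show "a \<odot>\<^bsub>PP U\<^esub> x \<in> carrier (PP U)"
    unfolding PP_simps(4) by (intro PP_memI) (auto intro: S_sm inP_D PP_mem)
next
  note ops = S_ops[OF inP_D(1)]
  fix a b x assume ab: "a \<in> carrier K" "b \<in> carrier K" and x: "x \<in> carrier (PP U)"
  show "(a \<oplus>\<^bsub>K\<^esub> b) \<odot>\<^bsub>PP U\<^esub> x = a \<odot>\<^bsub>PP U\<^esub> x \<oplus>\<^bsub>PP U\<^esub> b \<odot>\<^bsub>PP U\<^esub> x"
  proof
    fix p show "((a \<oplus>\<^bsub>K\<^esub> b) \<odot>\<^bsub>PP U\<^esub> x) p = (a \<odot>\<^bsub>PP U\<^esub> x \<oplus>\<^bsub>PP U\<^esub> b \<odot>\<^bsub>PP U\<^esub> x) p"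
      unfolding PP_simps(3,4) using ops(8)[OF _ PP_mem[OF x] PP_mem[OF x] PP_mem[OF x] ab] by (cases "inP U p") auto
  qed
  show "(a \<otimes>\<^bsub>K\<^esub> b) \<odot>\<^bsub>PP U\<^esub> x = a \<odot>\<^bsub>PP U\<^esub> (b \<odot>\<^bsub>PP U\<^esub> x)"
  proof
    fix p show "((a \<otimes>\<^bsub>K\<^esub> b) \<odot>\<^bsub>PP U\<^esub> x) p = (a \<odot>\<^bsub>PP U\<^esub> (b \<odot>\<^bsub>PP U\<^esub> x)) p"
      unfolding PP_simps(3,4) using ops(10)[OF _ PP_mem[OF x] PP_mem[OF x] PP_mem[OF x] ab] by (cases "inP U p") auto
  qed
next
  note ops = S_ops[OF inP_D(1)]
  fix a x y assume a: "a \<in> carrier K" and xy: "x \<in> carrier (PP U)" "y \<in> carrier (PP U)"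
  show "a \<odot>\<^bsub>PP U\<^esub> (x \<oplus>\<^bsub>PP U\<^esub> y) = a \<odot>\<^bsub>PP U\<^esub> x \<oplus>\<^bsub>PP U\<^esub> a \<odot>\<^bsub>PP U\<^esub> y"
  proof
    fix p show "(a \<odot>\<^bsub>PP U\<^esub> (x \<oplus>\<^bsub>PP U\<^esub> y)) p = (a \<odot>\<^bsub>PP U\<^esub> x \<oplus>\<^bsub>PP U\<^esub> a \<odot>\<^bsub>PP U\<^esub> y) p"
      unfolding PP_simps(3,4) using ops(9)[OF _ PP_mem[OF xy(1)] PP_mem[OF xy(2)] PP_mem[OF xy(2)] a a] by (cases "inP U p") auto
  qed
next
  note ops = S_ops[OF inP_D(1)]
  fix x assume x: "x \<in> carrier (PP U)"
  show "\<one>\<^bsub>K\<^esub> \<odot>\<^bsub>PP U\<^esub> x = x"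
  proof
    fix p show "(\<one>\<^bsub>K\<^esub> \<odot>\<^bsub>PP U\<^esub> x) p = x p"
      unfolding PP_simps(4) using S_one[OF inP_D(1)] PP_mem[OF x] PP_out[OF x]
      by (cases "inP U p") auto
  qed
qed

end



context tsh begin

definition FF :: "('a, 'k, 'a set set \<Rightarrow> ('a set \<times> 'v) set) kpsh" where
  "FF = \<lparr>sect = PP, rest = (\<lambda>V U g p. if inP U p then g p else {})\<rparr>"

definition iota :: "'a set \<Rightarrow> 'v \<Rightarrow> 'a set set \<Rightarrow> ('a set \<times> 'v) set" where
  "iota U s = (\<lambda>p. if inP U p then germ p U s else {})"

lemma FF_simps: "sect FF = PP" "rest FF V U g = (\<lambda>p. if inP U p then g p else {})"
  unfolding FF_def by simp_all

lemma inP_mono: "inP U p \<Longrightarrow> V\<in>T \<Longrightarrow> U\<subseteq>V \<Longrightarrow> inP V p"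
  unfolding inP_def using pfD(3) by blast

lemma fin_union_T: "finite C \<Longrightarrow> C \<subseteq> T \<Longrightarrow> \<Union>C \<in> T"
proof (induction C rule: finite_induct)
  case empty then show ?case using eT by simp
next
  case (insert x F) then show ?case using clU by simp
qed

lemma prime_cover:
  assumes p: "pf T p" and "finite C" "C \<subseteq> T" "\<Union>C \<in> p"
  shows "\<exists>W\<in>C. W\<in>p"
  using assms(2,3,4)
proof (induction C rule: finite_induct)
  case empty then show ?case using pfD(2)[OF p] by simp
next
  case (insert x D)
  have "x\<in>T" "\<Union>D \<in> T" using insert fin_union_T by auto
  moreover have "x \<union> \<Union>D \<in> p" using insert by simp
  ultimately have "x\<in>p \<or> \<Union>D \<in> p" using pfD(5)[OF p] by blast
  then show ?case using insert by blast
qed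

lemma cover_pt:
  assumes p: "inP U p" and c: "tcovering T C U"
  shows "\<exists>W\<in>C. W\<in>p"
proof -
  from c obtain C0 where "C0 \<subseteq> C" "finite C0" "\<Union>C0 = U" "C \<subseteq> T" unfolding tcovering_def by blast
  with prime_cover[OF inP_D(1)[OF p], of C0] inP_D(2)[OF p] show ?thesis by blast
qed

lemma FF_sheaf: "is_ksheaf K T FF"
  unfolding is_ksheaf_def FF_simps(1)
proof (intro conjI ballI allI impI)
  fix U assume "U\<in>T" show "module K (PP U)" by (rule module_PP)
next
  fix U V assume UV: "U\<in>T" "V\<in>T" "U\<subseteq>V"
  show "klinear K (PP V) (PP U) (rest FF V U)"
    unfolding klinear_def
  proof (intro conjI ballI)
    fix x assume x: "x \<in> carrier (PP V)"
    show "rest FF V U x \<in> carrier (PP U)" unfolding FF_simps(2)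
      by (rule PP_memI) (simp_all add: PP_mem[OF x inP_mono[OF _ UV(2) UV(3)]])
  next
    fix x y assume x: "x \<in> carrier (PP V)" and y: "y \<in> carrier (PP V)"
    show "rest FF V U (x \<oplus>\<^bsub>PP V\<^esub> y) = rest FF V U x \<oplus>\<^bsub>PP U\<^esub> rest FF V U y"
    proof
      fix p show "rest FF V U (x \<oplus>\<^bsub>PP V\<^esub> y) p = (rest FF V U x \<oplus>\<^bsub>PP U\<^esub> rest FF V U y) p"
        unfolding FF_simps(2) PP_simps using inP_mono[OF _ UV(2,3)] by (cases "inP U p") auto
    qed
  next
    fix a x assume a: "a \<in> carrier K" and x: "x \<in> carrier (PP V)"
    show "rest FF V U (a \<odot>\<^bsub>PP V\<^esub> x) = a \<odot>\<^bsub>PP U\<^esub> rest FF V U x"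
    proof
      fix p show "rest FF V U (a \<odot>\<^bsub>PP V\<^esub> x) p = (a \<odot>\<^bsub>PP U\<^esub> rest FF V U x) p"
        unfolding FF_simps(2) PP_simps using inP_mono[OF _ UV(2,3)] by (cases "inP U p") auto
    qed
  qed
next
  fix U s assume "U\<in>T" "s \<in> carrier (PP U)"
  then show "rest FF U U s = s" unfolding FF_simps(2) using PP_out[of s U] by (intro ext) simp
next
  fix U V W s assume UVW: "U\<in>T" "V\<in>T" "W\<in>T" "U \<subseteq> V \<and> V \<subseteq> W" and s: "s \<in> carrier (PP W)"
  show "rest FF V U (rest FF W V s) = rest FF W U s"
  proof
    fix p show "rest FF V U (rest FF W V s) p = rest FF W U s p"
      unfolding FF_simps(2) using inP_mono[OF _ UVW(2), of U p] UVW(4) by (cases "inP U p") simp_all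
  qed
next
  fix U C s t assume U: "U\<in>T" and C: "tcovering T C U" and s: "s \<in> carrier (PP U)" and t: "t \<in> carrier (PP U)"
    and eq: "\<forall>W\<in>C. rest FF U W s = rest FF U W t"
  show "s = t"
  proof
    fix p show "s p = t p"
    proof (cases "inP U p")
      case True
      then obtain W where W: "W\<in>C" "W\<in>p" using cover_pt[OF _ C] by blast
      have "inP W p" using W(2) True unfolding inP_def by blast
      then show ?thesis using fun_cong[OF eq[rule_format, OF W(1)], of p] unfolding FF_simps(2) by simp
    next
      case False then show ?thesis using PP_out[OF s] PP_out[OF t] by simp
    qed
  qed
next
  fix U C f assume U: "U\<in>T" and C: "tcovering T C U"
    and hyp: "(\<forall>W\<in>C. f W \<in> carrier (PP W)) \<and>
             (\<forall>W1\<in>C. \<forall>W2\<in>C. rest FF W1 (W1 \<inter> W2) (f W1) = rest FF W2 (W1 \<inter> W2) (f W2))"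
  have fW: "\<And>W. W\<in>C \<Longrightarrow> f W \<in> carrier (PP W)" using hyp by blast
  have comp: "\<And>W1 W2. W1\<in>C \<Longrightarrow> W2\<in>C \<Longrightarrow> rest FF W1 (W1 \<inter> W2) (f W1) = rest FF W2 (W1 \<inter> W2) (f W2)" using hyp by blast
  have CT: "C \<subseteq> T" and CU: "\<And>W. W\<in>C \<Longrightarrow> W\<subseteq>U" using C unfolding tcovering_def by blast+
  define s where "s = (\<lambda>p. if inP U p then f (SOME W. W\<in>C \<and> W\<in>p) p else {})"
  have sel: "inP U p \<Longrightarrow> (SOME W. W\<in>C \<and> W\<in>p) \<in> C \<and> (SOME W. W\<in>C \<and> W\<in>p) \<in> p" for p
  proof -
    assume "inP U p"
    then have "\<exists>W. W\<in>C \<and> W\<in>p" using cover_pt[OF _ C] by blast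
    from someI_ex[OF this] show ?thesis .
  qed
  have agree: "f W1 p = f W2 p" if "W1\<in>C" "W2\<in>C" "W1\<in>p" "W2\<in>p" "pf T p" for W1 W2 p
  proof -
    have "W1 \<inter> W2 \<in> p" using pfD(4)[OF that(5) that(3) that(4)] .
    then have "inP (W1\<inter>W2) p" using that(5) unfolding inP_def by simp
    then show ?thesis using fun_cong[OF comp[OF that(1,2)], of p] unfolding FF_simps(2) by simp
  qed
  show "\<exists>s\<in>carrier (PP U). \<forall>W\<in>C. rest FF U W s = f W"
  proof (rule bexI[of _ s], intro ballI)
    fix W assume W: "W\<in>C"
    show "rest FF U W s = f W"
    proof
      fix p show "rest FF U W s p = f W p"
      proof (cases "inP W p")
        case True
        have Up: "inP U p" using inP_mono[OF True U CU[OF W]] .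
        have "s p = f (SOME W. W\<in>C \<and> W\<in>p) p" using Up unfolding s_def by simp
        also have "\<dots> = f W p" using agree[of "SOME W. W\<in>C \<and> W\<in>p" W p] sel[OF Up] W True inP_D by blast
        finally show ?thesis unfolding FF_simps(2) using True by simp
      next
        case False then show ?thesis unfolding FF_simps(2) using PP_out[OF fW[OF W]] by simp
      qed
    qed
  next
    show "s \<in> carrier (PP U)"
    proof (rule PP_memI)
      fix p assume Up: "inP U p"
      let ?W = "SOME W. W\<in>C \<and> W\<in>p"
      have "inP ?W p" using sel[OF Up] inP_D(1)[OF Up] unfolding inP_def by blast
      then show "s p \<in> S p" unfolding s_def using Up PP_mem[OF fW] sel[OF Up] by simp
    next
      fix p assume "\<not> inP U p" then show "s p = {}" unfolding s_def by simp
    qed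
  qed
qed

lemma FF_flabby: "tflabby T FF"
  unfolding tflabby_def FF_simps(1)
proof (intro ballI impI)
  fix U V assume U: "U\<in>T" and V: "V\<in>T" and UV: "U\<subseteq>V"
  show "rest FF V U ` carrier (PP V) = carrier (PP U)"
  proof
    show "rest FF V U ` carrier (PP V) \<subseteq> carrier (PP U)"
    proof
      fix y assume "y \<in> rest FF V U ` carrier (PP V)"
      then obtain x where x: "x \<in> carrier (PP V)" "y = rest FF V U x" by blast
      show "y \<in> carrier (PP U)" unfolding x(2) FF_simps(2)
        by (rule PP_memI) (simp_all add: PP_mem[OF x(1) inP_mono[OF _ V UV]])
    qed
  next
    show "carrier (PP U) \<subseteq> rest FF V U ` carrier (PP V)"
    proof
      fix h assume h: "h \<in> carrier (PP U)"
      define g where "g = (\<lambda>p. if inP U p then h p else if inP V p then gz p else {})"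
      have g: "g \<in> carrier (PP V)"
      proof (rule PP_memI)
        fix p assume Vp: "inP V p"
        show "g p \<in> S p"
        proof (cases "inP U p")
          case True then show ?thesis unfolding g_def using PP_mem[OF h] by simp
        next
          case False then show ?thesis unfolding g_def using Vp S_zero[OF inP_D(1)[OF Vp] inP_D(2)[OF Vp]] by simp
        qed
      next
        fix p assume "\<not> inP V p"
        then have "\<not> inP U p" using inP_mono[OF _ V UV] by blast
        then show "g p = {}" unfolding g_def using \<open>\<not> inP V p\<close> by simp
      qed
      have "rest FF V U g = h"
      proof
        fix p show "rest FF V U g p = h p" unfolding FF_simps(2) g_def using PP_out[OF h] by simp
      qed
      then show "h \<in> rest FF V U ` carrier (PP V)" using g by blast
    qed
  qed
qed

lemma iota_mono: "is_kmono K T F FF iota"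
  unfolding is_kmono_def is_kmor_def FF_simps(1)
proof (intro conjI ballI impI)
  fix U assume U: "U\<in>T"
  interpret MU: module K "sect F U" by (rule modM[OF U])
  show "klinear K (sect F U) (PP U) (iota U)"
    unfolding klinear_def
  proof (intro conjI ballI)
    fix x assume x: "x \<in> carrier (sect F U)"
    show "iota U x \<in> carrier (PP U)" unfolding iota_def
      by (rule PP_memI) (auto intro: germ_S[OF _ x] inP_D)
  next
    fix x y assume x: "x \<in> carrier (sect F U)" and y: "y \<in> carrier (sect F U)"
    show "iota U (x \<oplus>\<^bsub>sect F U\<^esub> y) = iota U x \<oplus>\<^bsub>PP U\<^esub> iota U y"
    proof
      fix p show "iota U (x \<oplus>\<^bsub>sect F U\<^esub> y) p = (iota U x \<oplus>\<^bsub>PP U\<^esub> iota U y) p"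
        unfolding iota_def PP_simps using germ_add[OF inP_D(1) inP_D(2) x y] by (cases "inP U p") auto
    qed
  next
    fix a x assume a: "a \<in> carrier K" and x: "x \<in> carrier (sect F U)"
    show "iota U (a \<odot>\<^bsub>sect F U\<^esub> x) = a \<odot>\<^bsub>PP U\<^esub> iota U x"
    proof
      fix p show "iota U (a \<odot>\<^bsub>sect F U\<^esub> x) p = (a \<odot>\<^bsub>PP U\<^esub> iota U x) p"
        unfolding iota_def PP_simps using germ_smult[OF inP_D(1) inP_D(2) x a] by (cases "inP U p") auto
    qed
  qed
next
  fix U V s assume U: "U\<in>T" and V: "V\<in>T" and UV: "U\<subseteq>V" and s: "s \<in> carrier (sect F V)"
  show "iota U (rest F V U s) = rest FF V U (iota V s)"
  proof
    fix p show "iota U (rest F V U s) p = rest FF V U (iota V s) p"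
    proof (cases "inP U p")
      case True
      have Vp: "inP V p" using inP_mono[OF True V UV] .
      show ?thesis unfolding iota_def FF_simps(2)
        using True Vp germ_restr[OF inP_D(1)[OF Vp] inP_D(2)[OF Vp] inP_D(2)[OF True] UV s] by simp
    next
      case False then show ?thesis unfolding iota_def FF_simps(2) by simp
    qed
  qed
next
  fix U assume U: "U\<in>T"
  show "inj_on (iota U) (carrier (sect F U))"
  proof (rule inj_onI, rule ccontr)
    fix s t assume s: "s \<in> carrier (sect F U)" and t: "t \<in> carrier (sect F U)" and e: "iota U s = iota U t" and ne: "s \<noteq> t"
    define I where "I = {V\<in>T. V\<subseteq>U \<and> rest F U V s = rest F U V t}"
    have IT: "I \<subseteq> T" unfolding I_def by blast
    have down: "\<forall>A\<in>I. \<forall>B\<in>T. B\<subseteq>A \<longrightarrow> B\<in>I"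
    proof (intro ballI impI)
      fix A B assume A: "A\<in>I" and B: "B\<in>T" "B\<subseteq>A"
      have A': "A\<in>T" "A\<subseteq>U" "rest F U A s = rest F U A t" using A unfolding I_def by auto
      have "rest F U B s = rest F A B (rest F U A s)" using rcomp[OF B(1) A'(1) U B(2) A'(2) s] by simp
      also have "\<dots> = rest F A B (rest F U A t)" using A'(3) by simp
      also have "\<dots> = rest F U B t" using rcomp[OF B(1) A'(1) U B(2) A'(2) t] .
      finally show "B\<in>I" unfolding I_def using B A'(2) by blast
    qed
    have un: "\<forall>A\<in>I. \<forall>B\<in>I. A\<union>B\<in>I"
    proof (intro ballI)
      fix A B assume A: "A\<in>I" and B: "B\<in>I"
      have A': "A\<in>T" "A\<subseteq>U" "rest F U A s = rest F U A t" using A unfolding I_def by auto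
      have B': "B\<in>T" "B\<subseteq>U" "rest F U B s = rest F U B t" using B unfolding I_def by auto
      have ABT: "A\<union>B \<in> T" using clU[OF A'(1) B'(1)] .
      have ABU: "A\<union>B \<subseteq> U" using A'(2) B'(2) by blast
      have cov: "tcovering T {A,B} (A\<union>B)" unfolding tcovering_def using A'(1) B'(1) by auto
      have "rest F U (A\<union>B) s = rest F U (A\<union>B) t"
      proof (rule sep[OF ABT cov rcl[OF ABT U ABU s] rcl[OF ABT U ABU t]], intro ballI)
        fix W assume "W \<in> {A,B}"
        then show "rest F (A\<union>B) W (rest F U (A\<union>B) s) = rest F (A\<union>B) W (rest F U (A\<union>B) t)"
        proof
          assume W: "W = A"
          show ?thesis unfolding W using rcomp[OF A'(1) ABT U _ ABU s] rcomp[OF A'(1) ABT U _ ABU t] A'(3) by simp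
        next
          assume "W \<in> {B}" then have W: "W = B" by simp
          show ?thesis unfolding W using rcomp[OF B'(1) ABT U _ ABU s] rcomp[OF B'(1) ABT U _ ABU t] B'(3) by simp
        qed
      qed
      then show "A\<union>B \<in> I" unfolding I_def using ABT ABU by blast
    qed
    have eI: "{} \<in> I" unfolding I_def
      using eT empty_single[OF rcl[OF eT U _ s] rcl[OF eT U _ t]] by blast
    have UI: "U \<notin> I"
    proof
      assume "U\<in>I"
      then have "rest F U U s = rest F U U t" unfolding I_def by blast
      then show False using rid[OF U s] rid[OF U t] ne by simp
    qed
    have cl: "\<forall>A\<in>T. \<forall>B\<in>T. A\<union>B\<in>T \<and> A\<inter>B\<in>T" using clU clI by blast
    obtain p where p: "pf T p" "U\<in>p" "p\<inter>I={}" using prime_filter_exists[OF cl U IT down un eI UI] by blast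
    have "inP U p" unfolding inP_def using p by blast
    then have "germ p U s = germ p U t" using fun_cong[OF e, of p] unfolding iota_def by simp
    then obtain Z where Z: "Z\<in>p" "Z\<subseteq>U\<inter>U" "rest F U Z s = rest F U Z t" using germ_eqD[OF p(2) p(2) s t] by blast
    have "Z\<in>T" using Z(1) pfD(1)[OF p(1)] by blast
    then have "Z\<in>I" unfolding I_def using Z by blast
    then show False using p(3) Z(1) by blast
  qed
qed

end



lemma (in abelian_group) ag1: "a \<in> carrier G \<Longrightarrow> b \<in> carrier G \<Longrightarrow> a \<oplus> (b \<ominus> a) = b"
proof -
  assume ab: "a \<in> carrier G" "b \<in> carrier G"
  have "a \<oplus> (b \<oplus> \<ominus> a) = b \<oplus> (a \<oplus> \<ominus> a)" using ab by (intro a_lcomm) auto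
  then show ?thesis using ab by (simp add: minus_eq r_neg)
qed
lemma (in abelian_group) ag2: "a \<in> carrier G \<Longrightarrow> b \<in> carrier G \<Longrightarrow> b \<ominus> (b \<ominus> a) = a"
  by (simp add: minus_eq minus_add minus_minus a_assoc[symmetric] r_neg)
lemma (in abelian_group) ag3: "a \<in> carrier G \<Longrightarrow> a \<ominus> a = \<zero>"
  by (simp add: minus_eq r_neg)


locale sex =
  fixes K :: "'k ring" and T :: "'a set set"
    and F1 :: "('a,'k,'v1) kpsh" and F2 :: "('a,'k,'v2) kpsh" and F3 :: "('a,'k,'v3) kpsh"
    and phi :: "'a set \<Rightarrow> 'v1 \<Rightarrow> 'v2" and psi :: "'a set \<Rightarrow> 'v2 \<Rightarrow> 'v3"
  assumes fieldK: "field K"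
    and clU: "\<And>A B. A\<in>T \<Longrightarrow> B\<in>T \<Longrightarrow> A\<union>B\<in>T"
    and clI: "\<And>A B. A\<in>T \<Longrightarrow> B\<in>T \<Longrightarrow> A\<inter>B\<in>T"
    and eT: "{}\<in>T"
    and ex: "short_exact K T F1 F2 F3 phi psi"
    and fl1: "tflabby T F1"
begin

lemmas exs = ex[unfolded short_exact_def]
lemmas sh1 = exs[THEN conjunct1]
lemmas sh2 = exs[THEN conjunct2, THEN conjunct1]
lemmas sh3 = exs[THEN conjunct2, THEN conjunct2, THEN conjunct1]
lemmas phimor = exs[THEN conjunct2, THEN conjunct2, THEN conjunct2, THEN conjunct1]
lemmas psimor = exs[THEN conjunct2, THEN conjunct2, THEN conjunct2, THEN conjunct2, THEN conjunct1]
lemmas injx = exs[THEN conjunct2, THEN conjunct2, THEN conjunct2, THEN conjunct2, THEN conjunct2, THEN conjunct1]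
lemmas kerx = exs[THEN conjunct2, THEN conjunct2, THEN conjunct2, THEN conjunct2, THEN conjunct2, THEN conjunct2, THEN conjunct1]
lemmas locx = exs[THEN conjunct2, THEN conjunct2, THEN conjunct2, THEN conjunct2, THEN conjunct2, THEN conjunct2, THEN conjunct2]

sublocale S1: tsh K T F1 by (rule tsh.intro[OF fieldK clU clI eT sh1])
sublocale S2: tsh K T F2 by (rule tsh.intro[OF fieldK clU clI eT sh2])
sublocale S3: tsh K T F3 by (rule tsh.intro[OF fieldK clU clI eT sh3])

lemma philin: "U\<in>T \<Longrightarrow> klinear K (sect F1 U) (sect F2 U) (phi U)"
  using phimor unfolding is_kmor_def by blast
lemma psilin: "U\<in>T \<Longrightarrow> klinear K (sect F2 U) (sect F3 U) (psi U)"
  using psimor unfolding is_kmor_def by blast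
lemma phicomm: "U\<in>T \<Longrightarrow> V\<in>T \<Longrightarrow> U\<subseteq>V \<Longrightarrow> s\<in>carrier (sect F1 V) \<Longrightarrow> phi U (rest F1 V U s) = rest F2 V U (phi V s)"
  using phimor unfolding is_kmor_def by blast
lemma psicomm: "U\<in>T \<Longrightarrow> V\<in>T \<Longrightarrow> U\<subseteq>V \<Longrightarrow> s\<in>carrier (sect F2 V) \<Longrightarrow> psi U (rest F2 V U s) = rest F3 V U (psi V s)"
  using psimor unfolding is_kmor_def by blast

lemma inj1: "U\<in>T \<Longrightarrow> inj_on (phi U) (carrier (sect F1 U))"
  using injx by blast
lemma kerim: "U\<in>T \<Longrightarrow> {s \<in> carrier (sect F2 U). psi U s = \<zero>\<^bsub>sect F3 U\<^esub>} = phi U ` carrier (sect F1 U)"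
  using kerx by blast
lemma kerD: "U\<in>T \<Longrightarrow> s \<in> carrier (sect F2 U) \<Longrightarrow> psi U s = \<zero>\<^bsub>sect F3 U\<^esub> \<Longrightarrow> \<exists>r\<in>carrier (sect F1 U). s = phi U r"
  using kerim by blast
lemma psiphi: "U\<in>T \<Longrightarrow> r \<in> carrier (sect F1 U) \<Longrightarrow> psi U (phi U r) = \<zero>\<^bsub>sect F3 U\<^esub>"
  using kerim by blast
lemma loc: "U\<in>T \<Longrightarrow> t\<in>carrier (sect F3 U) \<Longrightarrow> \<exists>C. tcovering T C U \<and> (\<forall>W\<in>C. \<exists>s\<in>carrier (sect F2 W). psi W s = rest F3 U W t)"
  using locx by blast
lemma fl1D: "U\<in>T \<Longrightarrow> V\<in>T \<Longrightarrow> U\<subseteq>V \<Longrightarrow> r \<in> carrier (sect F1 U) \<Longrightarrow> \<exists>r'\<in>carrier (sect F1 V). r = rest F1 V U r'"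
  using fl1 unfolding tflabby_def by blast

lemma psi_surj:
  assumes U: "U\<in>T" and t: "t\<in>carrier (sect F3 U)"
  shows "\<exists>s\<in>carrier (sect F2 U). psi U s = t"
proof -
  obtain C where C: "tcovering T C U" and lift: "\<forall>W\<in>C. \<exists>s\<in>carrier (sect F2 W). psi W s = rest F3 U W t"
    using loc[OF U t] by blast
  obtain C0 where C0: "C0 \<subseteq> C" "finite C0" "\<Union>C0 = U" using C unfolding tcovering_def by blast
  have CT: "C \<subseteq> T" and CU: "\<And>W. W\<in>C \<Longrightarrow> W\<subseteq>U" using C unfolding tcovering_def by blast+
  have "D \<subseteq> C0 \<longrightarrow> (\<exists>s\<in>carrier (sect F2 (\<Union>D)). psi (\<Union>D) s = rest F3 U (\<Union>D) t)" if "finite D" for D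
    using that
  proof (induction D rule: finite_induct)
    case empty
    interpret M2: module K "sect F2 {}" by (rule S2.modM[OF eT])
    have "psi {} \<zero>\<^bsub>sect F2 {}\<^esub> \<in> carrier (sect F3 {})" by (rule klin_closed[OF psilin[OF eT]]) simp
    moreover have "rest F3 U {} t \<in> carrier (sect F3 {})" by (rule S3.rcl[OF eT U _ t]) simp
    ultimately have "psi {} \<zero>\<^bsub>sect F2 {}\<^esub> = rest F3 U {} t" by (rule S3.empty_single)
    then show ?case by auto
  next
    case (insert W D)
    show ?case
    proof
      assume sub: "insert W D \<subseteq> C0"
      then have WC: "W\<in>C" and DC: "D \<subseteq> C0" using C0(1) by auto
      define V where "V = \<Union>D"
      have VT: "V\<in>T" unfolding V_def using S1.fin_union_T[OF insert(1)] DC C0(1) CT by blast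
      have WT: "W\<in>T" using WC CT by blast
      have VU: "V\<subseteq>U" unfolding V_def using DC C0(3) by blast
      have WU: "W\<subseteq>U" using CU[OF WC] .
      obtain sV where sV: "sV \<in> carrier (sect F2 V)" "psi V sV = rest F3 U V t" using insert(3) DC unfolding V_def by blast
      obtain sW where sW: "sW \<in> carrier (sect F2 W)" "psi W sW = rest F3 U W t" using lift WC by blast
      define Y where "Y = V \<inter> W"
      have YT: "Y\<in>T" unfolding Y_def using clI[OF VT WT] .
      have YV: "Y\<subseteq>V" and YW: "Y\<subseteq>W" unfolding Y_def by auto
      have YU: "Y\<subseteq>U" using YV VU by blast
      interpret MY: module K "sect F2 Y" by (rule S2.modM[OF YT])
      interpret MY3: module K "sect F3 Y" by (rule S3.modM[OF YT])
      interpret MW: module K "sect F2 W" by (rule S2.modM[OF WT])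
      interpret MW3: module K "sect F3 W" by (rule S3.modM[OF WT])
      have cV: "rest F2 V Y sV \<in> carrier (sect F2 Y)" by (rule S2.rcl[OF YT VT YV sV(1)])
      have cW: "rest F2 W Y sW \<in> carrier (sect F2 Y)" by (rule S2.rcl[OF YT WT YW sW(1)])
      define d where "d = rest F2 V Y sV \<ominus>\<^bsub>sect F2 Y\<^esub> rest F2 W Y sW"
      have dc: "d \<in> carrier (sect F2 Y)" unfolding d_def using cV cW by simp
      have tY: "rest F3 U Y t \<in> carrier (sect F3 Y)" by (rule S3.rcl[OF YT U YU t])
      have "psi Y d = psi Y (rest F2 V Y sV) \<ominus>\<^bsub>sect F3 Y\<^esub> psi Y (rest F2 W Y sW)"
        unfolding d_def by (rule klin_diff[OF S2.modM[OF YT] S3.modM[OF YT] psilin[OF YT] cV cW])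
      also have "\<dots> = rest F3 U Y t \<ominus>\<^bsub>sect F3 Y\<^esub> rest F3 U Y t"
        using psicomm[OF YT VT YV sV(1)] psicomm[OF YT WT YW sW(1)] sV(2) sW(2)
          S3.rcomp[OF YT VT U YV VU t] S3.rcomp[OF YT WT U YW WU t] by simp
      also have "\<dots> = \<zero>\<^bsub>sect F3 Y\<^esub>" using MY3.ag3[OF tY] .
      finally obtain r where r: "r \<in> carrier (sect F1 Y)" "d = phi Y r" using kerD[OF YT dc] by blast
      obtain r' where r': "r' \<in> carrier (sect F1 W)" "r = rest F1 W Y r'" using fl1D[OF YT WT YW r(1)] by blast
      have pr': "phi W r' \<in> carrier (sect F2 W)" by (rule klin_closed[OF philin[OF WT] r'(1)])
      define sW' where "sW' = sW \<oplus>\<^bsub>sect F2 W\<^esub> phi W r'"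
      have sW'c: "sW' \<in> carrier (sect F2 W)" unfolding sW'_def using sW(1) pr' by simp
      have resW': "rest F2 W Y sW' = rest F2 V Y sV"
      proof -
        have "rest F2 W Y sW' = rest F2 W Y sW \<oplus>\<^bsub>sect F2 Y\<^esub> rest F2 W Y (phi W r')"
          unfolding sW'_def by (rule S2.radd[OF YT WT YW sW(1) pr'])
        also have "rest F2 W Y (phi W r') = d" using phicomm[OF YT WT YW r'(1)] r r'(2) by simp
        finally show ?thesis unfolding d_def using MY.ag1[OF cW cV] by simp
      qed
      have psiW': "psi W sW' = rest F3 U W t"
      proof -
        have "psi W sW' = psi W sW \<oplus>\<^bsub>sect F3 W\<^esub> psi W (phi W r')"
          unfolding sW'_def by (rule klin_add[OF psilin[OF WT] sW(1) pr'])
        also have "\<dots> = rest F3 U W t" using psiphi[OF WT r'(1)] sW(2) S3.rcl[OF WT U WU t] by simp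
        finally show ?thesis .
      qed
      define f where "f = (\<lambda>Z. if Z = V then sV else sW')"
      have UD: "\<Union>(insert W D) = V \<union> W" unfolding V_def by blast
      have VWT: "V \<union> W \<in> T" using clU[OF VT WT] .
      have VWU: "V \<union> W \<subseteq> U" using VU WU by blast
      have cov: "tcovering T {V,W} (V\<union>W)" unfolding tcovering_def using VT WT by auto
      have fc: "\<forall>Z\<in>{V,W}. f Z \<in> carrier (sect F2 Z)" unfolding f_def using sV(1) sW'c by auto
      have compat: "\<forall>W1\<in>{V,W}. \<forall>W2\<in>{V,W}. rest F2 W1 (W1\<inter>W2) (f W1) = rest F2 W2 (W1\<inter>W2) (f W2)"
      proof (intro ballI)
        fix W1 W2 assume "W1\<in>{V,W}" "W2\<in>{V,W}"
        then show "rest F2 W1 (W1\<inter>W2) (f W1) = rest F2 W2 (W1\<inter>W2) (f W2)"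
          using resW' unfolding f_def Y_def by (auto simp: Int_commute)
      qed
      obtain s where s: "s \<in> carrier (sect F2 (V\<union>W))" "\<forall>Z\<in>{V,W}. rest F2 (V\<union>W) Z s = f Z"
        using S2.glue[OF VWT cov fc compat] by blast
      have psis: "psi (V\<union>W) s \<in> carrier (sect F3 (V\<union>W))" by (rule klin_closed[OF psilin[OF VWT] s(1)])
      have tVW: "rest F3 U (V\<union>W) t \<in> carrier (sect F3 (V\<union>W))" by (rule S3.rcl[OF VWT U VWU t])
      have "psi (V\<union>W) s = rest F3 U (V\<union>W) t"
      proof (rule S3.sep[OF VWT cov psis tVW], intro ballI)
        fix Z assume Z: "Z\<in>{V,W}"
        have ZT: "Z\<in>T" and ZVW: "Z \<subseteq> V\<union>W" and ZU: "Z\<subseteq>U" using Z VT WT VU WU by auto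
        have "rest F3 (V\<union>W) Z (psi (V\<union>W) s) = psi Z (rest F2 (V\<union>W) Z s)"
          using psicomm[OF ZT VWT ZVW s(1)] by simp
        also have "\<dots> = psi Z (f Z)" using s(2) Z by (metis (no_types, lifting))
        also have "\<dots> = rest F3 U Z t" using Z sV(2) psiW' unfolding f_def by auto
        also have "\<dots> = rest F3 (V\<union>W) Z (rest F3 U (V\<union>W) t)" using S3.rcomp[OF ZT VWT U ZVW VWU t] by simp
        finally show "rest F3 (V\<union>W) Z (psi (V\<union>W) s) = rest F3 (V\<union>W) Z (rest F3 U (V\<union>W) t)" .
      qed
      then show "\<exists>s\<in>carrier (sect F2 (\<Union>(insert W D))). psi (\<Union>(insert W D)) s = rest F3 U (\<Union>(insert W D)) t"
        unfolding UD using s(1) by blast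
    qed
  qed
  then obtain s where "s\<in>carrier (sect F2 U)" "psi U s = rest F3 U U t" using C0 by auto
  then show ?thesis using S3.rid[OF U t] by auto
qed

lemma sections_ex: "U\<in>T \<Longrightarrow> sections_exact F1 F2 F3 phi psi U"
  unfolding sections_exact_def
proof (intro conjI)
  assume U: "U\<in>T"
  show "inj_on (phi U) (carrier (sect F1 U))" by (rule inj1[OF U])
  show "{s \<in> carrier (sect F2 U). psi U s = \<zero>\<^bsub>sect F3 U\<^esub>} = phi U ` carrier (sect F1 U)" by (rule kerim[OF U])
  show "psi U ` carrier (sect F2 U) = carrier (sect F3 U)"
    using klin_closed[OF psilin[OF U]] psi_surj[OF U] by blast
qed

lemma flabby_iff: "tflabby T F2 \<longleftrightarrow> tflabby T F3"
proof
  assume fl2: "tflabby T F2"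
  show "tflabby T F3" unfolding tflabby_def
  proof (intro ballI impI equalityI subsetI)
    fix U V y assume U: "U\<in>T" and V: "V\<in>T" and UV: "U\<subseteq>V" and y: "y \<in> rest F3 V U ` carrier (sect F3 V)"
    then show "y \<in> carrier (sect F3 U)" using S3.rcl[OF U V UV] by blast
  next
    fix U V t assume U: "U\<in>T" and V: "V\<in>T" and UV: "U\<subseteq>V" and t: "t \<in> carrier (sect F3 U)"
    obtain s where s: "s\<in>carrier (sect F2 U)" "psi U s = t" using psi_surj[OF U t] by blast
    obtain s' where s': "s'\<in>carrier (sect F2 V)" "s = rest F2 V U s'" using fl2 s(1) U V UV unfolding tflabby_def by blast
    have "rest F3 V U (psi V s') = t" using psicomm[OF U V UV s'(1)] s s'(2) by simp
    moreover have "psi V s' \<in> carrier (sect F3 V)" by (rule klin_closed[OF psilin[OF V] s'(1)])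
    ultimately show "t \<in> rest F3 V U ` carrier (sect F3 V)" by blast
  qed
next
  assume fl3: "tflabby T F3"
  show "tflabby T F2" unfolding tflabby_def
  proof (intro ballI impI equalityI subsetI)
    fix U V y assume U: "U\<in>T" and V: "V\<in>T" and UV: "U\<subseteq>V" and y: "y \<in> rest F2 V U ` carrier (sect F2 V)"
    then show "y \<in> carrier (sect F2 U)" using S2.rcl[OF U V UV] by blast
  next
    fix U V s assume U: "U\<in>T" and V: "V\<in>T" and UV: "U\<subseteq>V" and s: "s \<in> carrier (sect F2 U)"
    interpret MU: module K "sect F2 U" by (rule S2.modM[OF U])
    interpret MU3: module K "sect F3 U" by (rule S3.modM[OF U])
    interpret MV: module K "sect F2 V" by (rule S2.modM[OF V])
    have t: "psi U s \<in> carrier (sect F3 U)" by (rule klin_closed[OF psilin[OF U] s])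
    obtain t' where t': "t' \<in> carrier (sect F3 V)" "psi U s = rest F3 V U t'" using fl3 t U V UV unfolding tflabby_def by blast
    obtain s' where s': "s'\<in>carrier (sect F2 V)" "psi V s' = t'" using psi_surj[OF V t'(1)] by blast
    have rs': "rest F2 V U s' \<in> carrier (sect F2 U)" by (rule S2.rcl[OF U V UV s'(1)])
    define e where "e = rest F2 V U s' \<ominus>\<^bsub>sect F2 U\<^esub> s"
    have ec: "e \<in> carrier (sect F2 U)" unfolding e_def using rs' s by simp
    have "psi U e = psi U (rest F2 V U s') \<ominus>\<^bsub>sect F3 U\<^esub> psi U s"
      unfolding e_def by (rule klin_diff[OF S2.modM[OF U] S3.modM[OF U] psilin[OF U] rs' s])
    also have "\<dots> = \<zero>\<^bsub>sect F3 U\<^esub>" using psicomm[OF U V UV s'(1)] s'(2) t'(2) MU3.ag3[OF t] by simp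
    finally obtain r where r: "r \<in> carrier (sect F1 U)" "e = phi U r" using kerD[OF U ec] by blast
    obtain r' where r': "r' \<in> carrier (sect F1 V)" "r = rest F1 V U r'" using fl1D[OF U V UV r(1)] by blast
    have pr': "phi V r' \<in> carrier (sect F2 V)" by (rule klin_closed[OF philin[OF V] r'(1)])
    define s'' where "s'' = s' \<ominus>\<^bsub>sect F2 V\<^esub> phi V r'"
    have s''c: "s'' \<in> carrier (sect F2 V)" unfolding s''_def using s'(1) pr' by simp
    have "rest F2 V U s'' = rest F2 V U s' \<ominus>\<^bsub>sect F2 U\<^esub> rest F2 V U (phi V r')"
      unfolding s''_def by (rule klin_diff[OF S2.modM[OF V] S2.modM[OF U] S2.linr[OF U V UV] s'(1) pr'])
    also have "rest F2 V U (phi V r') = e" using phicomm[OF U V UV r'(1)] r r' by simp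
    also have "rest F2 V U s' \<ominus>\<^bsub>sect F2 U\<^esub> e = s" unfolding e_def using MU.ag2[OF s rs'] .
    finally show "s \<in> rest F2 V U ` carrier (sect F2 V)" using s''c by blast
  qed
qed

end


theorem mainTheorem16:
  fixes K :: "'k ring" and X :: "'a topology" and T :: "'a set set" and U :: "'a set"
  assumes "field K" and "tspace X T" and "U \<in> T"
  shows
    "(\<forall>F :: ('a, 'k, 'v) kpsh. is_ksheaf K T F \<longrightarrow>
        (\<exists>(F' :: ('a, 'k, 'a set set \<Rightarrow> ('a set \<times> 'v) set) kpsh) \<iota>.
            is_ksheaf K T F' \<and> tflabby T F' \<and> is_kmono K T F F' \<iota>))
   \<and> (\<forall>(F1 :: ('a, 'k, 'v1) kpsh) (F2 :: ('a, 'k, 'v2) kpsh) (F3 :: ('a, 'k, 'v3) kpsh) \<phi> \<psi>.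
        short_exact K T F1 F2 F3 \<phi> \<psi> \<and> tflabby T F1 \<longrightarrow> sections_exact F1 F2 F3 \<phi> \<psi> U)
   \<and> (\<forall>(F1 :: ('a, 'k, 'w1) kpsh) (F2 :: ('a, 'k, 'w2) kpsh) (F3 :: ('a, 'k, 'w3) kpsh) \<phi> \<psi>.
        short_exact K T F1 F2 F3 \<phi> \<psi> \<and> tflabby T F1 \<longrightarrow> (tflabby T F2 \<longleftrightarrow> tflabby T F3))"
proof -
  have ts: "{} \<in> T" "\<forall>U\<in>T. \<forall>V\<in>T. U \<union> V \<in> T \<and> U \<inter> V \<in> T"
    using assms(2) unfolding tspace_def by blast+
  have cU: "\<And>A B. A\<in>T \<Longrightarrow> B\<in>T \<Longrightarrow> A\<union>B\<in>T" using ts(2) by blast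
  have cI: "\<And>A B. A\<in>T \<Longrightarrow> B\<in>T \<Longrightarrow> A\<inter>B\<in>T" using ts(2) by blast
  have P1: "\<forall>F :: ('a, 'k, 'v) kpsh. is_ksheaf K T F \<longrightarrow>
        (\<exists>(F' :: ('a, 'k, 'a set set \<Rightarrow> ('a set \<times> 'v) set) kpsh) \<iota>.
            is_ksheaf K T F' \<and> tflabby T F' \<and> is_kmono K T F F' \<iota>)"
  proof (intro allI impI)
    fix F :: "('a, 'k, 'v) kpsh" assume hF: "is_ksheaf K T F"
    interpret tsh K T F by (rule tsh.intro[OF assms(1) cU cI ts(1) hF])
    show "\<exists>(F' :: ('a, 'k, 'a set set \<Rightarrow> ('a set \<times> 'v) set) kpsh) \<iota>.
            is_ksheaf K T F' \<and> tflabby T F' \<and> is_kmono K T F F' \<iota>"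
      using FF_sheaf FF_flabby iota_mono by blast
  qed
  have P2: "\<forall>(F1 :: ('a, 'k, 'v1) kpsh) (F2 :: ('a, 'k, 'v2) kpsh) (F3 :: ('a, 'k, 'v3) kpsh) \<phi> \<psi>.
        short_exact K T F1 F2 F3 \<phi> \<psi> \<and> tflabby T F1 \<longrightarrow> sections_exact F1 F2 F3 \<phi> \<psi> U"
  proof (intro allI impI)
    fix F1 :: "('a, 'k, 'v1) kpsh" and F2 :: "('a, 'k, 'v2) kpsh" and F3 :: "('a, 'k, 'v3) kpsh" and \<phi> \<psi>
    assume h: "short_exact K T F1 F2 F3 \<phi> \<psi> \<and> tflabby T F1"
    interpret sex K T F1 F2 F3 \<phi> \<psi> using h by (intro sex.intro[OF assms(1) cU cI ts(1)]) blast+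
    show "sections_exact F1 F2 F3 \<phi> \<psi> U" by (rule sections_ex[OF assms(3)])
  qed
  have P3: "\<forall>(F1 :: ('a, 'k, 'w1) kpsh) (F2 :: ('a, 'k, 'w2) kpsh) (F3 :: ('a, 'k, 'w3) kpsh) \<phi> \<psi>.
        short_exact K T F1 F2 F3 \<phi> \<psi> \<and> tflabby T F1 \<longrightarrow> (tflabby T F2 \<longleftrightarrow> tflabby T F3)"
  proof (intro allI impI)
    fix F1 :: "('a, 'k, 'w1) kpsh" and F2 :: "('a, 'k, 'w2) kpsh" and F3 :: "('a, 'k, 'w3) kpsh" and \<phi> \<psi>
    assume h: "short_exact K T F1 F2 F3 \<phi> \<psi> \<and> tflabby T F1"
    interpret sex K T F1 F2 F3 \<phi> \<psi> using h by (intro sex.intro[OF assms(1) cU cI ts(1)]) blast+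
    show "tflabby T F2 \<longleftrightarrow> tflabby T F3" by (rule flabby_iff)
  qed
  show ?thesis using P1 P2 P3 by blast
qed

end
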